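(* Let $\mathcal T=(T_1,\dots,T_n)\in B(H)^n$, $p>1$, and let $(\lambda_k)_{k=1}^\infty\subset\mathbb C^n$ satisfy $\sum_{k=1}^\infty\operatorname{dist}^p\{\lambda_k,W_{\rm e}(\mathcal T)\}<\infty$. Then there exists an $n$-tuple $\mathcal K=(K_1,\dots,K_n)$ with each $K_j$ in the Schatten class $S_p$ such that $(\lambda_k)_{k=1}^\infty\in\mathcal D(\mathcal T+\mathcal K)$.
   Context: $H$ is an infinite-dimensional complex separable Hilbert space. $W_{\rm e}(\mathcal T)$ is the set of $\lambda\in\mathbb C^n$ such that $\langle T_jx_k,x_k\rangle\to\lambda_j$ for all $j$ for some orthonormal sequence $(x_k)$. $\mathcal D(\mathcal T)$ is the set of sequences $(\langle T_1u_k,u_k\rangle,\dots,\langle T_nu_k,u_k\rangle)_{k\ge1}$ over orthonormal bases $(u_k)$ of $H$; $\mathcal T+\mathcal K=(T_1+K_1,\dots,T_n+K_n)$. Distances use $\|\lambda\|=\max_j|\lambda_j|$. *)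

theory Defs
  imports "HOL-Analysis.Analysis"
begin

text \<open>Concrete model of an infinite-dimensional complex separable Hilbert space:
  H = l2(nat), square-summable complex sequences.\<close>

type_synonym vec = "nat \<Rightarrow> complex"
type_synonym op = "vec \<Rightarrow> vec"

definition l2 :: "vec set" where
  "l2 = {x. summable (\<lambda>k. (cmod (x k))\<^sup>2)}"

definition l2inner :: "vec \<Rightarrow> vec \<Rightarrow> complex" where
  "l2inner x y = (\<Sum>k. x k * cnj (y k))"

definition l2norm :: "vec \<Rightarrow> real" where
  "l2norm x = sqrt (\<Sum>k. (cmod (x k))\<^sup>2)"

text \<open>Bounded linear operators on H (only their action on l2 matters).\<close>
definition bounded_op :: "op \<Rightarrow> bool" where
  "bounded_op T \<longleftrightarrow>
     (\<forall>x\<in>l2. T x \<in> l2) \<and>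
     (\<forall>x\<in>l2. \<forall>y\<in>l2. T (\<lambda>i. x i + y i) = (\<lambda>i. T x i + T y i)) \<and>
     (\<forall>x\<in>l2. \<forall>c. T (\<lambda>i. c * x i) = (\<lambda>i. c * T x i)) \<and>
     (\<exists>C. \<forall>x\<in>l2. l2norm (T x) \<le> C * l2norm x)"

definition opnorm :: "op \<Rightarrow> real" where
  "opnorm T = Sup {l2norm (T x) | x. x \<in> l2 \<and> l2norm x \<le> 1}"

definition rank_le :: "op \<Rightarrow> nat \<Rightarrow> bool" where
  "rank_le F k \<longleftrightarrow> (\<exists>v. (\<forall>i<k. v i \<in> l2) \<and>
      (\<forall>x\<in>l2. \<exists>c. F x = (\<lambda>m. \<Sum>i<k. c i * v i m)))"

definition approx_num :: "op \<Rightarrow> nat \<Rightarrow> real" where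
  "approx_num K k = Inf {opnorm (\<lambda>x i. K x i - F x i) | F. bounded_op F \<and> rank_le F k}"

definition schatten :: "real \<Rightarrow> op \<Rightarrow> bool" where
  "schatten p K \<longleftrightarrow> bounded_op K \<and> summable (\<lambda>k. (approx_num K k) powr p)"

definition orthonormal_seq :: "(nat \<Rightarrow> vec) \<Rightarrow> bool" where
  "orthonormal_seq u \<longleftrightarrow> (\<forall>k. u k \<in> l2) \<and>
     (\<forall>j k. l2inner (u j) (u k) = (if j = k then 1 else 0))"

definition onb :: "(nat \<Rightarrow> vec) \<Rightarrow> bool" where
  "onb u \<longleftrightarrow> orthonormal_seq u \<and>
     (\<forall>y\<in>l2. (\<forall>k. l2inner y (u k) = 0) \<longrightarrow> y = (\<lambda>_. 0))"

text \<open>Essential numerical range of a tuple (index type 'n is {1..n}).\<close>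
definition ess_num_range :: "('n \<Rightarrow> op) \<Rightarrow> ('n \<Rightarrow> complex) set" where
  "ess_num_range T = {lam. \<exists>x. orthonormal_seq x \<and>
     (\<forall>j. (\<lambda>k. l2inner (T j (x k)) (x k)) \<longlonglongrightarrow> lam j)}"

definition diag_set :: "('n \<Rightarrow> op) \<Rightarrow> (nat \<Rightarrow> 'n \<Rightarrow> complex) set" where
  "diag_set T = {d. \<exists>u. onb u \<and> d = (\<lambda>k j. l2inner (T j (u k)) (u k))}"

definition maxdist :: "('n::finite \<Rightarrow> complex) \<Rightarrow> ('n \<Rightarrow> complex) \<Rightarrow> real" where
  "maxdist a b = Max (range (\<lambda>j. cmod (a j - b j)))"

definition setdist_max :: "('n::finite \<Rightarrow> complex) \<Rightarrow> ('n \<Rightarrow> complex) set \<Rightarrow> real" where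
  "setdist_max a S = Inf (maxdist a ` S)"

end

theory Submission
  imports Defs "HOL-Library.Nat_Bijection"
begin


abbreviation evec :: "nat \<Rightarrow> vec" where "evec i \<equiv> (\<lambda>k. if k = i then 1 else 0)"

lemma l2_iff: "x \<in> l2 \<longleftrightarrow> summable (\<lambda>k. (cmod (x k))\<^sup>2)" by (simp add: l2_def)

lemma l2_zero[simp]: "(\<lambda>_. 0) \<in> l2" by (simp add: l2_def)

lemma l2_add: assumes "x \<in> l2" "y \<in> l2" shows "(\<lambda>i. x i + y i) \<in> l2"
proof -
  have "summable (\<lambda>k. 2 * (cmod (x k))\<^sup>2 + 2 * (cmod (y k))\<^sup>2)"
    using assms by (intro summable_add summable_mult) (auto simp: l2_def)
  moreover have "norm ((cmod (x k + y k))\<^sup>2) \<le> 2 * (cmod (x k))\<^sup>2 + 2 * (cmod (y k))\<^sup>2" for k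
  proof -
    have "cmod (x k + y k) \<le> cmod (x k) + cmod (y k)" by (rule norm_triangle_ineq)
    hence "(cmod (x k + y k))\<^sup>2 \<le> (cmod (x k) + cmod (y k))\<^sup>2" by (simp add: power_mono)
    also have "\<dots> \<le> 2 * (cmod (x k))\<^sup>2 + 2 * (cmod (y k))\<^sup>2"
    proof -
      have "0 \<le> (cmod (x k) - cmod (y k))\<^sup>2" by simp
      thus ?thesis by (simp add: power2_eq_square algebra_simps)
    qed
    finally show ?thesis by simp
  qed
  ultimately show ?thesis unfolding l2_def mem_Collect_eq by (rule summable_comparison_test'[where N=0])
qed

lemma l2_scale: assumes "x \<in> l2" shows "(\<lambda>i. c * x i) \<in> l2"
proof -
  have "summable (\<lambda>k. (cmod c)\<^sup>2 * (cmod (x k))\<^sup>2)" using assms by (intro summable_mult) (auto simp: l2_def)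
  thus ?thesis unfolding l2_def by (simp add: norm_mult power_mult_distrib)
qed

lemma l2_minus: assumes "x \<in> l2" shows "(\<lambda>i. - x i) \<in> l2"
  using l2_scale[OF assms, of "-1"] by simp

lemma l2_diff: assumes "x \<in> l2" "y \<in> l2" shows "(\<lambda>i. x i - y i) \<in> l2"
  using l2_add[OF assms(1) l2_minus[OF assms(2)]] by simp

lemma l2_sum: assumes "\<And>k. k \<in> I \<Longrightarrow> w k \<in> l2" shows "(\<lambda>m. \<Sum>k\<in>I. c k * w k m) \<in> l2"
  using assms
proof (induction I rule: infinite_finite_induct)
  case (insert a F)
  have "(\<lambda>m. c a * w a m + (\<Sum>k\<in>F. c k * w k m)) \<in> l2"
    using insert by (intro l2_add l2_scale) auto
  thus ?case using insert by simp
qed auto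

lemma l2_finsupp: assumes "\<And>k. k \<ge> N \<Longrightarrow> x k = 0" shows "x \<in> l2"
proof -
  have "summable (\<lambda>k. (cmod (x k))\<^sup>2)"
    by (rule summable_finite[of "{..<N}"]) (auto simp: assms not_less)
  thus ?thesis by (simp add: l2_def)
qed

lemma l2_evec[simp]: "evec i \<in> l2" by (rule l2_finsupp[of "Suc i"]) auto

lemma summable_norm_inner: assumes "x \<in> l2" "y \<in> l2" shows "summable (\<lambda>k. cmod (x k) * cmod (y k))"
proof -
  have "summable (\<lambda>k. ((cmod (x k))\<^sup>2 + (cmod (y k))\<^sup>2) / 2)"
    using assms by (intro summable_divide summable_add) (auto simp: l2_def)
  moreover have "norm (cmod (x k) * cmod (y k)) \<le> ((cmod (x k))\<^sup>2 + (cmod (y k))\<^sup>2) / 2" for k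
  proof -
    have "0 \<le> (cmod (x k) - cmod (y k))\<^sup>2" by simp
    thus ?thesis by (simp add: abs_mult power2_eq_square algebra_simps)
  qed
  ultimately show ?thesis by (rule summable_comparison_test'[where N=0])
qed

lemma summable_inner: assumes "x \<in> l2" "y \<in> l2" shows "summable (\<lambda>k. x k * cnj (y k))"
proof -
  have "summable (\<lambda>k. norm (x k * cnj (y k)))" using summable_norm_inner[OF assms] by (simp add: norm_mult)
  thus ?thesis by (rule summable_norm_cancel)
qed

lemma inner_add_left: assumes "x \<in> l2" "y \<in> l2" "z \<in> l2"
  shows "l2inner (\<lambda>i. x i + y i) z = l2inner x z + l2inner y z"
  unfolding l2inner_def using summable_inner[OF assms(1,3)] summable_inner[OF assms(2,3)]
  by (simp add: distrib_right suminf_add)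

lemma inner_scale_left: assumes "x \<in> l2" "z \<in> l2"
  shows "l2inner (\<lambda>i. c * x i) z = c * l2inner x z"
  unfolding l2inner_def using summable_inner[OF assms] by (simp add: mult.assoc suminf_mult)

lemma inner_conj: assumes "x \<in> l2" "y \<in> l2" shows "l2inner y x = cnj (l2inner x y)"
proof -
  have "(\<lambda>k. x k * cnj (y k)) sums l2inner x y"
    using summable_inner[OF assms] unfolding l2inner_def by (simp add: summable_sums)
  hence "(\<lambda>k. cnj (x k * cnj (y k))) sums cnj (l2inner x y)" by (simp only: sums_cnj)
  hence "(\<lambda>k. y k * cnj (x k)) sums cnj (l2inner x y)" by (simp add: mult.commute)
  thus ?thesis unfolding l2inner_def by (simp add: sums_unique[symmetric])
qed


lemma inner_add_right: assumes "x \<in> l2" "y \<in> l2" "z \<in> l2"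
  shows "l2inner z (\<lambda>i. x i + y i) = l2inner z x + l2inner z y"
  using assms by (simp add: inner_conj[of _ z] inner_add_left l2_add)

lemma inner_scale_right: assumes "x \<in> l2" "z \<in> l2"
  shows "l2inner z (\<lambda>i. c * x i) = cnj c * l2inner z x"
  using assms by (simp add: inner_conj[of _ z] inner_scale_left l2_scale)

lemma inner_diff_left: assumes "x \<in> l2" "y \<in> l2" "z \<in> l2"
  shows "l2inner (\<lambda>i. x i - y i) z = l2inner x z - l2inner y z"
  using inner_add_left[OF assms(1) l2_minus[OF assms(2)] assms(3)]
    inner_scale_left[OF assms(2,3), of "-1"] by simp

lemma inner_diff_right: assumes "x \<in> l2" "y \<in> l2" "z \<in> l2"
  shows "l2inner z (\<lambda>i. x i - y i) = l2inner z x - l2inner z y"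
  using assms by (simp add: inner_conj[of _ z] inner_diff_left l2_diff)

lemma inner_sum_left: assumes "\<And>k. k \<in> I \<Longrightarrow> w k \<in> l2" "y \<in> l2"
  shows "l2inner (\<lambda>m. \<Sum>k\<in>I. c k * w k m) y = (\<Sum>k\<in>I. c k * l2inner (w k) y)"
  using assms
proof (induction I rule: infinite_finite_induct)
  case (infinite A) thus ?case by (simp add: l2inner_def)
next
  case empty thus ?case by (simp add: l2inner_def)
next
  case (insert a F)
  have "l2inner (\<lambda>m. \<Sum>k\<in>insert a F. c k * w k m) y
      = l2inner (\<lambda>m. c a * w a m + (\<Sum>k\<in>F. c k * w k m)) y" using insert by simp
  also have "\<dots> = c a * l2inner (w a) y + l2inner (\<lambda>m. \<Sum>k\<in>F. c k * w k m) y"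
    using insert by (simp add: inner_add_left[OF l2_scale l2_sum] inner_scale_left)
  finally show ?case using insert by simp
qed

lemma inner_sum_right: assumes "\<And>k. k \<in> I \<Longrightarrow> w k \<in> l2" "y \<in> l2"
  shows "l2inner y (\<lambda>m. \<Sum>k\<in>I. c k * w k m) = (\<Sum>k\<in>I. cnj (c k) * l2inner y (w k))"
  using assms by (simp add: inner_conj[of _ y] inner_sum_left l2_sum)

lemma l2norm_nonneg: assumes "x \<in> l2" shows "0 \<le> l2norm x"
proof -
  have "0 \<le> (\<Sum>k. (cmod (x k))\<^sup>2)" by (rule suminf_nonneg) (use assms in \<open>auto simp: l2_def\<close>)
  thus ?thesis unfolding l2norm_def by simp
qed

lemma l2norm_sq: assumes "x \<in> l2" shows "(l2norm x)\<^sup>2 = (\<Sum>k. (cmod (x k))\<^sup>2)"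
proof -
  have "0 \<le> (\<Sum>k. (cmod (x k))\<^sup>2)" by (rule suminf_nonneg) (use assms in \<open>auto simp: l2_def\<close>)
  thus ?thesis unfolding l2norm_def by simp
qed

lemma inner_self: assumes "x \<in> l2" shows "l2inner x x = complex_of_real ((l2norm x)\<^sup>2)"
proof -
  have "(\<lambda>k. x k * cnj (x k)) = (\<lambda>k. complex_of_real ((cmod (x k))\<^sup>2))"
    using complex_norm_square by (intro ext) metis
  moreover have "summable (\<lambda>k. (cmod (x k))\<^sup>2)" using assms by (simp add: l2_def)
  ultimately show ?thesis unfolding l2inner_def l2norm_sq[OF assms]
    by (simp add: suminf_of_real)
qed

lemma inner_evec_right: "l2inner x (evec i) = x i"
proof -
  have "(\<lambda>k. x k * cnj (if k = i then 1 else 0)) = (\<lambda>k. if k = i then x k else 0)" by auto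
  thus ?thesis unfolding l2inner_def using sums_single[of i x] by (simp add: sums_iff)
qed

lemma inner_evec_left: assumes "x \<in> l2" shows "l2inner (evec i) x = cnj (x i)"
  using inner_conj[OF assms l2_evec, of i] by (simp add: inner_evec_right)

lemma L2_partial: assumes "x \<in> l2" shows "L2_set (\<lambda>k. cmod (x k)) {..<n} \<le> l2norm x"
  unfolding L2_set_def l2norm_def
  by (rule real_sqrt_le_mono, rule sum_le_suminf) (use assms in \<open>auto simp: l2_def\<close>)

lemma summable_mult_l2: assumes "summable (\<lambda>k. (a k)\<^sup>2)" "summable (\<lambda>k. (b k)\<^sup>2)"
  and "\<And>k. 0 \<le> a k" "\<And>k. 0 \<le> b k"
  shows "summable (\<lambda>k. a k * b k)"
    and "(\<Sum>k. a k * b k) \<le> sqrt (\<Sum>k. (a k)\<^sup>2) * sqrt (\<Sum>k. (b k)\<^sup>2)"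
proof -
  have b: "(\<Sum>k<n. a k * b k) \<le> sqrt (\<Sum>k. (a k)\<^sup>2) * sqrt (\<Sum>k. (b k)\<^sup>2)" for n
  proof -
    have "(\<Sum>k<n. a k * b k) \<le> L2_set a {..<n} * L2_set b {..<n}"
      using L2_set_mult_ineq[of a b "{..<n}"] assms by simp
    also have "\<dots> \<le> sqrt (\<Sum>k. (a k)\<^sup>2) * sqrt (\<Sum>k. (b k)\<^sup>2)"
      unfolding L2_set_def
      by (intro mult_mono real_sqrt_le_mono sum_le_suminf) (use assms in \<open>auto intro: suminf_nonneg sum_nonneg\<close>)
    finally show ?thesis .
  qed
  show "summable (\<lambda>k. a k * b k)" by (rule summableI_nonneg_bounded[OF _ b]) (simp add: assms)
  thus "(\<Sum>k. a k * b k) \<le> sqrt (\<Sum>k. (a k)\<^sup>2) * sqrt (\<Sum>k. (b k)\<^sup>2)"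
    by (rule suminf_le_const[OF _ b])
qed

lemma cauchy_schwarz: assumes "x \<in> l2" "y \<in> l2" shows "cmod (l2inner x y) \<le> l2norm x * l2norm y"
proof -
  have "cmod (l2inner x y) \<le> (\<Sum>k. cmod (x k * cnj (y k)))"
    unfolding l2inner_def
    by (rule summable_norm) (use summable_norm_inner[OF assms] in \<open>simp add: norm_mult\<close>)
  also have "\<dots> = (\<Sum>k. cmod (x k) * cmod (y k))" by (simp add: norm_mult)
  also have "\<dots> \<le> l2norm x * l2norm y"
    using summable_mult_l2(2)[of "\<lambda>k. cmod (x k)" "\<lambda>k. cmod (y k)"] assms
    by (simp add: l2_def l2norm_def)
  finally show ?thesis .
qed

lemma l2norm_triangle: assumes "x \<in> l2" "y \<in> l2" shows "l2norm (\<lambda>i. x i + y i) \<le> l2norm x + l2norm y"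
proof -
  have b: "(\<Sum>k<n. (cmod (x k + y k))\<^sup>2) \<le> (l2norm x + l2norm y)\<^sup>2" for n
  proof -
    have "L2_set (\<lambda>k. cmod (x k + y k)) {..<n} \<le> L2_set (\<lambda>k. cmod (x k) + cmod (y k)) {..<n}"
      by (rule L2_set_mono) (auto intro: norm_triangle_ineq)
    also have "\<dots> \<le> L2_set (\<lambda>k. cmod (x k)) {..<n} + L2_set (\<lambda>k. cmod (y k)) {..<n}"
      by (rule L2_set_triangle_ineq)
    also have "\<dots> \<le> l2norm x + l2norm y" using L2_partial[OF assms(1), of n] L2_partial[OF assms(2), of n] by linarith
    finally have "sqrt (\<Sum>k<n. (cmod (x k + y k))\<^sup>2) \<le> l2norm x + l2norm y" by (simp add: L2_set_def)
    moreover have "0 \<le> (\<Sum>k<n. (cmod (x k + y k))\<^sup>2)" by (rule sum_nonneg) simp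
    ultimately have "(sqrt (\<Sum>k<n. (cmod (x k + y k))\<^sup>2))\<^sup>2 \<le> (l2norm x + l2norm y)\<^sup>2"
      by (intro power_mono) auto
    thus ?thesis using \<open>0 \<le> (\<Sum>k<n. (cmod (x k + y k))\<^sup>2)\<close> by simp
  qed
  have "(\<Sum>k. (cmod (x k + y k))\<^sup>2) \<le> (l2norm x + l2norm y)\<^sup>2"
    by (rule suminf_le_const[OF _ b]) (use l2_add[OF assms] in \<open>simp add: l2_def\<close>)
  hence "sqrt (\<Sum>k. (cmod (x k + y k))\<^sup>2) \<le> sqrt ((l2norm x + l2norm y)\<^sup>2)" by (rule real_sqrt_le_mono)
  thus ?thesis using l2norm_nonneg[OF assms(1)] l2norm_nonneg[OF assms(2)] by (simp add: l2norm_def)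
qed

lemma l2norm_scale: assumes "x \<in> l2" shows "l2norm (\<lambda>i. c * x i) = cmod c * l2norm x"
proof -
  have "(\<Sum>k. (cmod (c * x k))\<^sup>2) = (cmod c)\<^sup>2 * (\<Sum>k. (cmod (x k))\<^sup>2)"
    using assms by (simp add: norm_mult power_mult_distrib suminf_mult l2_def)
  thus ?thesis by (simp add: l2norm_def real_sqrt_mult)
qed

lemma l2norm_zero_iff: assumes "x \<in> l2" shows "l2norm x = 0 \<longleftrightarrow> x = (\<lambda>_. 0)"
proof
  assume "l2norm x = 0"
  hence "(\<Sum>k. (cmod (x k))\<^sup>2) = 0" using l2norm_sq[OF assms] by simp
  hence "\<forall>k. (cmod (x k))\<^sup>2 = 0" using assms by (subst (asm) suminf_eq_zero_iff) (auto simp: l2_def)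
  thus "x = (\<lambda>_. 0)" by auto
qed (simp add: l2norm_def)

lemma l2norm_diff_sym: assumes "x \<in> l2" "y \<in> l2" shows "l2norm (\<lambda>i. x i - y i) = l2norm (\<lambda>i. y i - x i)"
  using l2norm_scale[OF l2_diff[OF assms], of "-1"] by simp

lemma l2norm_diff_triangle: assumes "x \<in> l2" "y \<in> l2" "z \<in> l2"
  shows "l2norm (\<lambda>i. x i - z i) \<le> l2norm (\<lambda>i. x i - y i) + l2norm (\<lambda>i. y i - z i)"
  using l2norm_triangle[OF l2_diff[OF assms(1,2)] l2_diff[OF assms(2,3)]] by simp


definition orthoset :: "(nat \<Rightarrow> vec) \<Rightarrow> nat set \<Rightarrow> bool" where
  "orthoset w I \<longleftrightarrow> (\<forall>k\<in>I. w k \<in> l2) \<and> (\<forall>a\<in>I. \<forall>b\<in>I. l2inner (w a) (w b) = (if a = b then 1 else 0))"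

definition proj :: "(nat \<Rightarrow> vec) \<Rightarrow> nat set \<Rightarrow> vec \<Rightarrow> vec" where
  "proj w I x = (\<lambda>m. \<Sum>k\<in>I. l2inner x (w k) * w k m)"

lemma orthoset_l2: "orthoset w I \<Longrightarrow> k \<in> I \<Longrightarrow> w k \<in> l2" by (simp add: orthoset_def)

lemma orthoset_inner: "orthoset w I \<Longrightarrow> a \<in> I \<Longrightarrow> b \<in> I \<Longrightarrow> l2inner (w a) (w b) = (if a = b then 1 else 0)"
  by (simp add: orthoset_def)

lemma orthoset_subset: "orthoset w I \<Longrightarrow> J \<subseteq> I \<Longrightarrow> orthoset w J"
  unfolding orthoset_def by (meson subsetD)

lemma proj_l2: "orthoset w I \<Longrightarrow> proj w I x \<in> l2"
  unfolding proj_def by (rule l2_sum) (auto simp: orthoset_def)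

lemma sum_delta_mult: "finite I \<Longrightarrow> a \<in> I \<Longrightarrow> (\<Sum>k\<in>I. f k * (if k = a then 1 else 0)) = (f a :: complex)"
  by (simp add: if_distrib cong: if_cong)

lemma inner_proj_w: assumes "finite I" "orthoset w I" "a \<in> I" "x \<in> l2"
  shows "l2inner (proj w I x) (w a) = l2inner x (w a)"
proof -
  have "l2inner (proj w I x) (w a) = (\<Sum>k\<in>I. l2inner x (w k) * l2inner (w k) (w a))"
    unfolding proj_def using assms by (intro inner_sum_left) (auto simp: orthoset_def)
  also have "\<dots> = (\<Sum>k\<in>I. l2inner x (w k) * (if k = a then 1 else 0))"
    using assms by (intro sum.cong) (auto simp: orthoset_def)
  also have "\<dots> = l2inner x (w a)" using assms by (simp add: sum_delta_mult)
  finally show ?thesis .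
qed

lemma resid_orth: assumes "finite I" "orthoset w I" "a \<in> I" "x \<in> l2"
  shows "l2inner (\<lambda>i. x i - proj w I x i) (w a) = 0"
  using assms by (simp add: inner_diff_left proj_l2 orthoset_l2 inner_proj_w)

lemma pythagoras_proj: assumes "finite I" "orthoset w I" "x \<in> l2"
  shows "(l2norm (\<lambda>i. x i - proj w I x i))\<^sup>2 = (l2norm x)\<^sup>2 - (\<Sum>k\<in>I. (cmod (l2inner x (w k)))\<^sup>2)"
proof -
  let ?P = "proj w I x" define rr where "rr = (\<lambda>i. x i - proj w I x i)"
  have P: "?P \<in> l2" by (rule proj_l2[OF assms(2)])
  have r: "rr \<in> l2" unfolding rr_def by (rule l2_diff[OF assms(3) P])
  have wl: "\<And>k. k \<in> I \<Longrightarrow> w k \<in> l2" using assms(2) by (simp add: orthoset_def)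
  have "l2inner ?P rr = (\<Sum>k\<in>I. l2inner x (w k) * l2inner (w k) rr)"
    unfolding proj_def by (rule inner_sum_left) (use wl r in auto)
  also have "\<dots> = 0"
  proof (rule sum.neutral, rule ballI)
    fix k assume k: "k \<in> I"
    have "l2inner (w k) rr = cnj (l2inner rr (w k))" using inner_conj[OF r wl[OF k]] .
    thus "l2inner x (w k) * l2inner (w k) rr = 0" using resid_orth[OF assms(1,2) k assms(3)] by (simp add: rr_def)
  qed
  finally have Pr: "l2inner ?P rr = 0" .
  have "l2inner x ?P = (\<Sum>k\<in>I. cnj (l2inner x (w k)) * l2inner x (w k))"
    unfolding proj_def by (rule inner_sum_right) (use wl assms in auto)
  also have "\<dots> = complex_of_real (\<Sum>k\<in>I. (cmod (l2inner x (w k)))\<^sup>2)"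
    by (simp add: complex_norm_square mult.commute del: of_real_power)
  finally have xP: "l2inner x ?P = complex_of_real (\<Sum>k\<in>I. (cmod (l2inner x (w k)))\<^sup>2)" .
  have "l2inner rr rr = l2inner x rr - l2inner ?P rr" using inner_diff_left[OF assms(3) P r] by (simp add: rr_def)
  also have "\<dots> = l2inner x rr" using Pr by simp
  also have "\<dots> = l2inner x x - l2inner x ?P" using inner_diff_right[OF assms(3) P assms(3)] by (simp add: rr_def)
  finally have "complex_of_real ((l2norm rr)\<^sup>2) = complex_of_real ((l2norm x)\<^sup>2 - (\<Sum>k\<in>I. (cmod (l2inner x (w k)))\<^sup>2))"
    using inner_self[OF r] inner_self[OF assms(3)] xP by simp
  thus ?thesis unfolding rr_def by (simp only: of_real_eq_iff)
qed

lemma bessel_fin: assumes "finite I" "orthoset w I" "x \<in> l2"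
  shows "(\<Sum>k\<in>I. (cmod (l2inner x (w k)))\<^sup>2) \<le> (l2norm x)\<^sup>2"
  using pythagoras_proj[OF assms] by (smt (verit) zero_le_power2)

lemma orthonormal_seq_orthoset: "orthonormal_seq u \<Longrightarrow> orthoset u I"
  by (simp add: orthonormal_seq_def orthoset_def)

lemma bessel_seq: assumes "orthonormal_seq u" "x \<in> l2"
  shows "summable (\<lambda>k. (cmod (l2inner x (u k)))\<^sup>2)" "(\<Sum>k. (cmod (l2inner x (u k)))\<^sup>2) \<le> (l2norm x)\<^sup>2"
proof -
  have b: "(\<Sum>k<n. (cmod (l2inner x (u k)))\<^sup>2) \<le> (l2norm x)\<^sup>2" for n
    by (rule bessel_fin[OF _ orthonormal_seq_orthoset[OF assms(1)] assms(2)]) simp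
  show "summable (\<lambda>k. (cmod (l2inner x (u k)))\<^sup>2)" by (rule summableI_nonneg_bounded[OF _ b]) simp
  thus "(\<Sum>k. (cmod (l2inner x (u k)))\<^sup>2) \<le> (l2norm x)\<^sup>2" by (rule suminf_le_const[OF _ b])
qed

lemma bessel_tendsto: assumes "orthonormal_seq u" "x \<in> l2"
  shows "(\<lambda>k. l2inner x (u k)) \<longlonglongrightarrow> 0"
proof -
  have "(\<lambda>k. (cmod (l2inner x (u k)))\<^sup>2) \<longlonglongrightarrow> 0" by (rule summable_LIMSEQ_zero[OF bessel_seq(1)[OF assms]])
  hence "(\<lambda>k. sqrt ((cmod (l2inner x (u k)))\<^sup>2)) \<longlonglongrightarrow> sqrt 0" by (intro tendsto_intros)
  hence "(\<lambda>k. cmod (l2inner x (u k))) \<longlonglongrightarrow> 0" by simp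
  thus ?thesis by (simp add: tendsto_norm_zero_iff)
qed

lemma bessel_tendsto': assumes "orthonormal_seq u" "x \<in> l2"
  shows "(\<lambda>k. l2inner (u k) x) \<longlonglongrightarrow> 0"
proof -
  have "(\<lambda>k. cnj (l2inner x (u k))) \<longlonglongrightarrow> cnj 0" by (intro tendsto_intros bessel_tendsto[OF assms])
  moreover have "l2inner (u k) x = cnj (l2inner x (u k))" for k
    using assms by (intro inner_conj) (auto simp: orthonormal_seq_def)
  ultimately show ?thesis by simp
qed



lemma bop_l2: "bounded_op T \<Longrightarrow> x \<in> l2 \<Longrightarrow> T x \<in> l2" by (simp add: bounded_op_def)
lemma bop_add: "bounded_op T \<Longrightarrow> x \<in> l2 \<Longrightarrow> y \<in> l2 \<Longrightarrow> T (\<lambda>i. x i + y i) = (\<lambda>i. T x i + T y i)"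
  by (simp add: bounded_op_def)
lemma bop_scale: "bounded_op T \<Longrightarrow> x \<in> l2 \<Longrightarrow> T (\<lambda>i. c * x i) = (\<lambda>i. c * T x i)"
  by (simp add: bounded_op_def)
lemma bop_bound: assumes "bounded_op T" obtains C where "C \<ge> 0" "\<And>x. x \<in> l2 \<Longrightarrow> l2norm (T x) \<le> C * l2norm x"
proof -
  obtain C where C: "\<forall>x\<in>l2. l2norm (T x) \<le> C * l2norm x" using assms by (auto simp: bounded_op_def)
  have "l2norm (T x) \<le> max C 0 * l2norm x" if "x \<in> l2" for x
    by (rule order_trans[OF C[rule_format, OF that]], rule mult_right_mono) (auto simp: l2norm_nonneg that)
  thus ?thesis using that[of "max C 0"] by auto
qed

lemma bop_zero: assumes "bounded_op T" shows "T (\<lambda>_. 0) = (\<lambda>_. 0)"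
  using bop_scale[OF assms l2_zero, of 0] by simp

lemma bop_minus: assumes "bounded_op T" "x \<in> l2" shows "T (\<lambda>i. - x i) = (\<lambda>i. - T x i)"
  using bop_scale[OF assms, of "-1"] by simp

lemma bop_diff: assumes "bounded_op T" "x \<in> l2" "y \<in> l2" shows "T (\<lambda>i. x i - y i) = (\<lambda>i. T x i - T y i)"
  using bop_add[OF assms(1,2) l2_minus[OF assms(3)]] bop_minus[OF assms(1,3)] by simp

lemma bop_sum: assumes "bounded_op T" "\<And>k. k \<in> I \<Longrightarrow> w k \<in> l2"
  shows "T (\<lambda>m. \<Sum>k\<in>I. c k * w k m) = (\<lambda>m. \<Sum>k\<in>I. c k * T (w k) m)"
  using assms(2)
proof (induction I rule: infinite_finite_induct)
  case (infinite A) thus ?case using bop_zero[OF assms(1)] by simp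
next
  case empty thus ?case using bop_zero[OF assms(1)] by simp
next
  case (insert a F)
  have "T (\<lambda>m. \<Sum>k\<in>insert a F. c k * w k m) = T (\<lambda>m. c a * w a m + (\<Sum>k\<in>F. c k * w k m))"
    using insert by simp
  also have "\<dots> = (\<lambda>m. c a * T (w a) m + T (\<lambda>m. \<Sum>k\<in>F. c k * w k m) m)"
    using insert by (simp add: bop_add[OF assms(1) l2_scale l2_sum] bop_scale[OF assms(1)])
  finally show ?case using insert by simp
qed

lemma inner_T_bound: assumes "x \<in> l2" "y \<in> l2" "\<And>x. x \<in> l2 \<Longrightarrow> l2norm (T x) \<le> C * l2norm x" "bounded_op T"
  shows "cmod (l2inner (T x) y) \<le> C * l2norm x * l2norm y"
proof -
  have "cmod (l2inner (T x) y) \<le> l2norm (T x) * l2norm y" by (rule cauchy_schwarz[OF bop_l2[OF assms(4,1)] assms(2)])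
  also have "\<dots> \<le> C * l2norm x * l2norm y" by (rule mult_right_mono[OF assms(3)[OF assms(1)] l2norm_nonneg[OF assms(2)]])
  finally show ?thesis .
qed

lemma orthoset_evec: "orthoset evec I"
  by (auto simp: orthoset_def inner_evec_right)

lemma proj_evec: "proj evec {..<N} x = (\<lambda>i. if i < N then x i else 0)"
  unfolding proj_def by (auto simp: inner_evec_right if_distrib cong: if_cong)

lemma trunc_tendsto: assumes "x \<in> l2"
  shows "(\<lambda>N. l2norm (\<lambda>i. x i - (if i < N then x i else 0))) \<longlonglongrightarrow> 0"
proof -
  have eq: "(l2norm (\<lambda>i. x i - (if i < N then x i else 0)))\<^sup>2 = (l2norm x)\<^sup>2 - (\<Sum>k<N. (cmod (x k))\<^sup>2)" for N
    using pythagoras_proj[OF _ orthoset_evec assms, of "{..<N}"] by (simp add: proj_evec inner_evec_right)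
  have "(\<lambda>N. (l2norm x)\<^sup>2 - (\<Sum>k<N. (cmod (x k))\<^sup>2)) \<longlonglongrightarrow> (l2norm x)\<^sup>2 - (\<Sum>k. (cmod (x k))\<^sup>2)"
    using assms by (intro tendsto_intros summable_LIMSEQ) (simp add: l2_def)
  hence "(\<lambda>N. (l2norm (\<lambda>i. x i - (if i < N then x i else 0)))\<^sup>2) \<longlonglongrightarrow> 0"
    by (simp add: eq l2norm_sq[OF assms])
  hence "(\<lambda>N. sqrt ((l2norm (\<lambda>i. x i - (if i < N then x i else 0)))\<^sup>2)) \<longlonglongrightarrow> sqrt 0"
    by (intro tendsto_intros)
  moreover have "(\<lambda>i. x i - (if i < N then x i else 0)) \<in> l2" for N
    by (rule l2_diff[OF assms l2_finsupp[of N]]) auto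
  ultimately show ?thesis using l2norm_nonneg by simp
qed

lemma trunc_as_sum: "(\<lambda>i. if i < N then x i else 0) = (\<lambda>m. \<Sum>l<N. x l * evec l m)"
  by (auto simp: if_distrib cong: if_cong)

lemma adjoint_exists: assumes T: "bounded_op T" and f: "f \<in> l2"
  shows "\<exists>z\<in>l2. \<forall>x\<in>l2. l2inner (T x) f = l2inner x z"
proof -
  obtain C where C0: "C \<ge> 0" and C: "\<And>x. x \<in> l2 \<Longrightarrow> l2norm (T x) \<le> C * l2norm x"
    using bop_bound[OF T] by blast
  define z where "z = (\<lambda>l. cnj (l2inner (T (evec l)) f))"
  have key: "l2inner (T (\<lambda>i. if i < N then x i else 0)) f = (\<Sum>l<N. x l * cnj (z l))" for N x
  proof -
    have "l2inner (T (\<lambda>i. if i < N then x i else 0)) f = l2inner (\<lambda>m. \<Sum>l<N. x l * T (evec l) m) f"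
      by (simp only: trunc_as_sum bop_sum[OF T l2_evec])
    also have "\<dots> = (\<Sum>l<N. x l * l2inner (T (evec l)) f)"
      by (rule inner_sum_left) (auto intro: bop_l2[OF T] f)
    finally show ?thesis by (simp add: z_def)
  qed
  have zl2: "z \<in> l2"
  proof -
    have b: "(\<Sum>l<N. (cmod (z l))\<^sup>2) \<le> (C * l2norm f)\<^sup>2" for N
    proof -
      define t where "t = (\<lambda>i. if i < N then z i else 0)"
      have tl2: "t \<in> l2" unfolding t_def by (rule l2_finsupp[of N]) auto
      define S where "S = (\<Sum>l<N. (cmod (z l))\<^sup>2)"
      have S0: "S \<ge> 0" unfolding S_def by (rule sum_nonneg) simp
      have "(l2norm t)\<^sup>2 = (\<Sum>k. (cmod (t k))\<^sup>2)" by (rule l2norm_sq[OF tl2])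
      also have "\<dots> = (\<Sum>k<N. (cmod (t k))\<^sup>2)" by (rule suminf_finite) (auto simp: t_def)
      also have "\<dots> = S" unfolding S_def t_def by simp
      finally have tn: "l2norm t = sqrt S" using l2norm_nonneg[OF tl2] by (metis real_sqrt_unique)
      have "l2inner (T t) f = (\<Sum>l<N. z l * cnj (z l))" unfolding t_def by (rule key)
      also have "\<dots> = complex_of_real S" unfolding S_def
        by (simp add: complex_norm_square del: of_real_power)
      finally have "S = cmod (l2inner (T t) f)" using S0 by simp
      also have "\<dots> \<le> C * l2norm t * l2norm f" by (rule inner_T_bound[OF tl2 f C T])
      finally have "S \<le> C * sqrt S * l2norm f" by (simp add: tn)
      hence "sqrt S * sqrt S \<le> sqrt S * (C * l2norm f)" using S0 by (simp add: algebra_simps)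
      hence h: "sqrt S * sqrt S \<le> sqrt S * (C * l2norm f)" .
      have "sqrt S \<le> C * l2norm f"
      proof (cases "S = 0")
        case True thus ?thesis using C0 l2norm_nonneg[OF f] by simp
      next
        case False hence "0 < sqrt S" using S0 by simp
        thus ?thesis by (rule mult_left_le_imp_le[OF h])
      qed
      hence "(sqrt S)\<^sup>2 \<le> (C * l2norm f)\<^sup>2" using S0 by (intro power_mono) auto
      thus ?thesis using S0 by (simp add: S_def)
    qed
    show ?thesis unfolding l2_def by (auto intro: summableI_nonneg_bounded[OF _ b])
  qed
  have "l2inner (T x) f = l2inner x z" if x: "x \<in> l2" for x
  proof -
    let ?t = "\<lambda>N. (\<lambda>i. if i < N then x i else 0)"
    have tl2: "?t N \<in> l2" for N by (rule l2_finsupp[of N]) auto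
    have "(\<lambda>N. C * l2norm (\<lambda>i. x i - ?t N i) * l2norm f) \<longlonglongrightarrow> C * 0 * l2norm f"
      by (intro tendsto_intros trunc_tendsto[OF x])
    moreover have "cmod (l2inner (T x) f - l2inner (T (?t N)) f) \<le> C * l2norm (\<lambda>i. x i - ?t N i) * l2norm f" for N
    proof -
      have "l2inner (T x) f - l2inner (T (?t N)) f = l2inner (T (\<lambda>i. x i - ?t N i)) f"
        by (simp add: bop_diff[OF T x tl2] inner_diff_left[OF bop_l2[OF T x] bop_l2[OF T tl2] f])
      also have "cmod \<dots> \<le> C * l2norm (\<lambda>i. x i - ?t N i) * l2norm f"
        by (rule inner_T_bound[OF l2_diff[OF x tl2] f C T])
      finally show ?thesis .
    qed
    ultimately have "(\<lambda>N. l2inner (T x) f - l2inner (T (?t N)) f) \<longlonglongrightarrow> 0"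
      using Lim_null_comparison[of "\<lambda>N. l2inner (T x) f - l2inner (T (?t N)) f" "\<lambda>N. C * l2norm (\<lambda>i. x i - ?t N i) * l2norm f" sequentially]
      by auto
    hence "(\<lambda>N. l2inner (T x) f - (l2inner (T x) f - l2inner (T (?t N)) f)) \<longlonglongrightarrow> l2inner (T x) f - 0"
      by (intro tendsto_intros)
    hence "(\<lambda>N. \<Sum>l<N. x l * cnj (z l)) \<longlonglongrightarrow> l2inner (T x) f" by (simp add: key)
    hence "(\<lambda>l. x l * cnj (z l)) sums l2inner (T x) f" by (simp add: sums_def)
    thus ?thesis unfolding l2inner_def by (simp add: sums_iff)
  qed
  thus ?thesis using zl2 by blast
qed

lemma weak_T: assumes T: "bounded_op T" and u: "orthonormal_seq u" and f: "f \<in> l2"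
  shows "(\<lambda>k. l2inner (T (u k)) f) \<longlonglongrightarrow> 0"
proof -
  obtain z where z: "z \<in> l2" "\<And>x. x \<in> l2 \<Longrightarrow> l2inner (T x) f = l2inner x z" using adjoint_exists[OF T f] by blast
  have "u k \<in> l2" for k using u by (simp add: orthonormal_seq_def)
  thus ?thesis using bessel_tendsto'[OF u z(1)] z(2) by simp
qed



lemma unit_norm: assumes "x \<in> l2" "l2inner x x = 1" shows "l2norm x = 1"
proof -
  have "complex_of_real ((l2norm x)\<^sup>2) = 1" using inner_self[OF assms(1)] assms(2) by simp
  hence "(l2norm x)\<^sup>2 = 1" by (metis of_real_eq_1_iff)
  thus ?thesis using l2norm_nonneg[OF assms(1)] by (simp add: power2_eq_1_iff)
qed

lemma orthonormal_seqD: assumes "orthonormal_seq x"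
  shows "x k \<in> l2" "l2inner (x k) (x k) = 1" "l2norm (x k) = 1" "j \<noteq> k \<Longrightarrow> l2inner (x j) (x k) = 0"
  using assms unit_norm[of "x k"] by (auto simp: orthonormal_seq_def)

lemma uniform_bound: fixes T :: "'n::finite \<Rightarrow> op" assumes "\<forall>j. bounded_op (T j)"
  shows "\<exists>C\<ge>0. \<forall>j. \<forall>x\<in>l2. l2norm (T j x) \<le> C * l2norm x"
proof -
  have "\<forall>j. \<exists>C. C \<ge> 0 \<and> (\<forall>x\<in>l2. l2norm (T j x) \<le> C * l2norm x)"
    using assms bop_bound by metis
  then obtain Cf where Cf: "\<And>j. Cf j \<ge> 0" "\<And>j x. x \<in> l2 \<Longrightarrow> l2norm (T j x) \<le> Cf j * l2norm x" by metis
  define C where "C = (\<Sum>j\<in>UNIV. Cf j)"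
  have "Cf j \<le> C" for j unfolding C_def by (rule member_le_sum) (auto intro: Cf)
  hence "l2norm (T j x) \<le> C * l2norm x" if "x \<in> l2" for j x
    using Cf(2)[OF that, of j] l2norm_nonneg[OF that] by (meson mult_right_mono order_trans)
  moreover have "C \<ge> 0" unfolding C_def by (rule sum_nonneg) (auto intro: Cf)
  ultimately show ?thesis by blast
qed

lemma diag_bound: assumes "bounded_op T" "\<And>x. x \<in> l2 \<Longrightarrow> l2norm (T x) \<le> C * l2norm x" "x \<in> l2" "l2inner x x = 1"
  shows "cmod (l2inner (T x) x) \<le> C"
  using inner_T_bound[OF assms(3,3) assms(2,1)] unit_norm[OF assms(3,4)] by simp

lemma ess_bound: fixes T :: "'n::finite \<Rightarrow> op"
  assumes T: "\<forall>j. bounded_op (T j)" and C: "\<forall>j. \<forall>x\<in>l2. l2norm (T j x) \<le> C * l2norm x"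
    and mu: "\<mu> \<in> ess_num_range T"
  shows "cmod (\<mu> j) \<le> C"
proof -
  obtain x where x: "orthonormal_seq x" "\<And>j. (\<lambda>k. l2inner (T j (x k)) (x k)) \<longlonglongrightarrow> \<mu> j"
    using mu by (auto simp: ess_num_range_def)
  have "(\<lambda>k. cmod (l2inner (T j (x k)) (x k))) \<longlonglongrightarrow> cmod (\<mu> j)" by (intro tendsto_intros x(2))
  moreover have "cmod (l2inner (T j (x k)) (x k)) \<le> C" for k
    using diag_bound[of "T j" C "x k"] T C orthonormal_seqD[OF x(1)] by auto
  ultimately show ?thesis by (intro tendsto_le[OF _ tendsto_const]) auto
qed

lemma orthonormal_evec: "orthonormal_seq evec"
  by (simp add: orthonormal_seq_def inner_evec_right)

lemma ess_nonempty: fixes T :: "'n::finite \<Rightarrow> op"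
  assumes T: "\<forall>j. bounded_op (T j)" shows "ess_num_range T \<noteq> {}"
proof -
  obtain C where C: "C \<ge> 0" "\<forall>j. \<forall>x\<in>l2. l2norm (T j x) \<le> C * l2norm x" using uniform_bound[OF T] by blast
  define a where "a = (\<lambda>k. \<chi> j. l2inner (T j (evec k)) (evec k))"
  have "norm (a k) \<le> of_nat CARD('n) * C" for k
  proof -
    have "norm (a k) \<le> (\<Sum>j\<in>UNIV. norm (a k $ j))" by (simp add: norm_vec_def L2_set_le_sum)
    also have "\<dots> \<le> (\<Sum>j\<in>(UNIV::'n set). C)"
      by (rule sum_mono) (use diag_bound[of _ C "evec k"] T C orthonormal_seqD[OF orthonormal_evec] in \<open>auto simp: a_def\<close>)
    finally show ?thesis by simp
  qed
  hence "bounded (range a)" by (auto simp: bounded_iff)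
  then obtain l r where lr: "strict_mono r" "(a \<circ> r) \<longlonglongrightarrow> l" using bounded_imp_convergent_subsequence by blast
  have "orthonormal_seq (\<lambda>k. evec (r k))"
    using lr(1) by (auto simp: orthonormal_seq_def inner_evec_right strict_mono_eq)
  moreover have "(\<lambda>k. l2inner (T j (evec (r k))) (evec (r k))) \<longlonglongrightarrow> l $ j" for j
  proof -
    have "(\<lambda>k. (a \<circ> r) k $ j) \<longlonglongrightarrow> l $ j" by (intro tendsto_intros lr(2))
    thus ?thesis by (simp add: a_def o_def)
  qed
  ultimately have "(\<lambda>j. l $ j) \<in> ess_num_range T" unfolding ess_num_range_def by blast
  thus ?thesis by blast
qed

lemma proj_norm_sq: assumes "finite I" "orthoset w I" "x \<in> l2"
  shows "(l2norm (proj w I x))\<^sup>2 = (\<Sum>k\<in>I. (cmod (l2inner x (w k)))\<^sup>2)"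
proof -
  have wl: "\<And>k. k \<in> I \<Longrightarrow> w k \<in> l2" using assms(2) by (simp add: orthoset_def)
  have P: "proj w I x \<in> l2" by (rule proj_l2[OF assms(2)])
  have "l2inner (proj w I x) (proj w I x) = (\<Sum>k\<in>I. cnj (l2inner x (w k)) * l2inner (proj w I x) (w k))"
    unfolding proj_def[of w I x] by (rule inner_sum_right) (use wl P[unfolded proj_def] in auto)
  also have "\<dots> = (\<Sum>k\<in>I. cnj (l2inner x (w k)) * l2inner x (w k))"
    by (rule sum.cong) (auto simp: inner_proj_w[OF assms(1,2) _ assms(3)])
  also have "\<dots> = complex_of_real (\<Sum>k\<in>I. (cmod (l2inner x (w k)))\<^sup>2)"
    by (simp add: complex_norm_square mult.commute del: of_real_power)
  finally show ?thesis using inner_self[OF P] by (simp only: of_real_eq_iff)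
qed

lemma diag_perturb: assumes T: "bounded_op T" "\<And>x. x \<in> l2 \<Longrightarrow> l2norm (T x) \<le> C * l2norm x"
  and xy: "x \<in> l2" "y \<in> l2"
  shows "cmod (l2inner (T y) y - l2inner (T x) x) \<le> C * l2norm (\<lambda>i. y i - x i) * l2norm y + C * l2norm x * l2norm (\<lambda>i. y i - x i)"
proof -
  have d: "(\<lambda>i. y i - x i) \<in> l2" by (rule l2_diff[OF xy(2,1)])
  have "l2inner (T y) y - l2inner (T x) x = l2inner (T (\<lambda>i. y i - x i)) y + l2inner (T x) (\<lambda>i. y i - x i)"
    by (simp add: bop_diff[OF T(1) xy(2,1)] inner_diff_left[OF bop_l2[OF T(1) xy(2)] bop_l2[OF T(1) xy(1)] xy(2)]
        inner_diff_right[OF xy(2,1) bop_l2[OF T(1) xy(1)]])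
  also have "cmod \<dots> \<le> cmod (l2inner (T (\<lambda>i. y i - x i)) y) + cmod (l2inner (T x) (\<lambda>i. y i - x i))"
    by (rule norm_triangle_ineq)
  also have "\<dots> \<le> C * l2norm (\<lambda>i. y i - x i) * l2norm y + C * l2norm x * l2norm (\<lambda>i. y i - x i)"
    by (intro add_mono inner_T_bound[OF _ _ T(2,1)] d xy)
  finally show ?thesis .
qed

lemma cross_perturb: assumes T: "bounded_op T" "\<And>x. x \<in> l2 \<Longrightarrow> l2norm (T x) \<le> C * l2norm x"
  and xy: "x \<in> l2" "y \<in> l2" and r: "r \<in> l2"
  shows "cmod (l2inner (T y) r) \<le> C * l2norm (\<lambda>i. y i - x i) * l2norm r + cmod (l2inner (T x) r)"
    and "cmod (l2inner (T r) y) \<le> C * l2norm r * l2norm (\<lambda>i. y i - x i) + cmod (l2inner (T r) x)"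
proof -
  have d: "(\<lambda>i. y i - x i) \<in> l2" by (rule l2_diff[OF xy(2,1)])
  have "l2inner (T y) r = l2inner (T (\<lambda>i. y i - x i)) r + l2inner (T x) r"
    by (simp add: bop_diff[OF T(1) xy(2,1)] inner_diff_left[OF bop_l2[OF T(1) xy(2)] bop_l2[OF T(1) xy(1)] r])
  also have "cmod \<dots> \<le> cmod (l2inner (T (\<lambda>i. y i - x i)) r) + cmod (l2inner (T x) r)" by (rule norm_triangle_ineq)
  finally show "cmod (l2inner (T y) r) \<le> C * l2norm (\<lambda>i. y i - x i) * l2norm r + cmod (l2inner (T x) r)"
    using inner_T_bound[OF d r T(2,1)] by linarith
  have "l2inner (T r) y = l2inner (T r) (\<lambda>i. y i - x i) + l2inner (T r) x"
    by (simp add: inner_diff_right[OF xy(2,1) bop_l2[OF T(1) r]])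
  also have "cmod \<dots> \<le> cmod (l2inner (T r) (\<lambda>i. y i - x i)) + cmod (l2inner (T r) x)" by (rule norm_triangle_ineq)
  finally show "cmod (l2inner (T r) y) \<le> C * l2norm r * l2norm (\<lambda>i. y i - x i) + cmod (l2inner (T r) x)"
    using inner_T_bound[OF r d T(2,1)] by linarith
qed



lemma fresh_vector: fixes T :: "'n::finite \<Rightarrow> op"
  assumes T: "\<forall>j. bounded_op (T j)" and C: "\<forall>j. \<forall>x\<in>l2. l2norm (T j x) \<le> C * l2norm x"
    and mu: "\<mu> \<in> ess_num_range T" and I: "finite I" "orthoset w I" and r: "r \<in> l2" and eta: "\<eta> > 0"
  shows "\<exists>y\<in>l2. l2inner y y = 1 \<and> (\<forall>a\<in>I. l2inner y (w a) = 0) \<and>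
          (\<forall>j. cmod (l2inner (T j y) y - \<mu> j) \<le> \<eta> \<and> cmod (l2inner (T j y) r) \<le> \<eta> \<and> cmod (l2inner (T j r) y) \<le> \<eta>)"
proof -
  obtain x where x: "orthonormal_seq x" "\<And>j. (\<lambda>k. l2inner (T j (x k)) (x k)) \<longlonglongrightarrow> \<mu> j"
    using mu by (auto simp: ess_num_range_def)
  note xD = orthonormal_seqD[OF x(1)]
  have Tj: "bounded_op (T j)" "\<And>z. z \<in> l2 \<Longrightarrow> l2norm (T j z) \<le> C * l2norm z" for j using T C by auto
  define S where "S = (\<lambda>k. \<Sum>a\<in>I. (cmod (l2inner (x k) (w a)))\<^sup>2)"
  define P where "P = (\<lambda>k. proj w I (x k))"
  define y' where "y' = (\<lambda>k. (\<lambda>i. x k i - P k i))"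
  define N where "N = (\<lambda>k. l2norm (y' k))"
  define y where "y = (\<lambda>k. (\<lambda>i. complex_of_real (1 / N k) * y' k i))"
  define \<epsilon> where "\<epsilon> = (\<lambda>k. l2norm (\<lambda>i. y k i - x k i))"
  have wl: "\<And>a. a \<in> I \<Longrightarrow> w a \<in> l2" using I(2) by (simp add: orthoset_def)
  have Pl2: "P k \<in> l2" for k unfolding P_def by (rule proj_l2[OF I(2)])
  have y'l2: "y' k \<in> l2" for k unfolding y'_def by (rule l2_diff[OF xD(1) Pl2])
  have yl2: "y k \<in> l2" for k unfolding y_def by (rule l2_scale[OF y'l2])
  have S0: "(\<lambda>k. S k) \<longlonglongrightarrow> 0"
  proof -
    have "(\<lambda>k. \<Sum>a\<in>I. (cmod (l2inner (x k) (w a)))\<^sup>2) \<longlonglongrightarrow> (\<Sum>a\<in>I. (cmod (0::complex))\<^sup>2)"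
      by (intro tendsto_intros bessel_tendsto'[OF x(1)] wl)
    thus ?thesis by (simp add: S_def)
  qed
  have Nsq: "(N k)\<^sup>2 = 1 - S k" for k
    using pythagoras_proj[OF I xD(1), of k] xD(3)[of k] by (simp add: N_def y'_def P_def S_def)
  have N1: "N \<longlonglongrightarrow> 1"
  proof -
    have "(\<lambda>k. sqrt (1 - S k)) \<longlonglongrightarrow> sqrt (1 - 0)" by (intro tendsto_intros S0)
    moreover have "N = (\<lambda>k. sqrt (1 - S k))"
    proof
      fix k show "N k = sqrt (1 - S k)" using Nsq[of k] l2norm_nonneg[OF y'l2] by (metis N_def real_sqrt_unique)
    qed
    ultimately show ?thesis by simp
  qed
  have Pn: "l2norm (P k) = sqrt (S k)" for k
    using proj_norm_sq[OF I xD(1), of k] l2norm_nonneg[OF Pl2] by (metis P_def S_def real_sqrt_unique)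
  have eps_le: "\<epsilon> k \<le> cmod (complex_of_real (1 / N k) - 1) * N k + sqrt (S k)" for k
  proof -
    have "\<epsilon> k \<le> l2norm (\<lambda>i. y k i - y' k i) + l2norm (\<lambda>i. y' k i - x k i)"
      unfolding \<epsilon>_def by (rule l2norm_diff_triangle[OF yl2 y'l2 xD(1)])
    also have "(\<lambda>i. y k i - y' k i) = (\<lambda>i. (complex_of_real (1 / N k) - 1) * y' k i)"
      by (simp add: y_def algebra_simps)
    also have "l2norm \<dots> = cmod (complex_of_real (1 / N k) - 1) * N k" by (simp add: l2norm_scale[OF y'l2] N_def)
    also have "(\<lambda>i. y' k i - x k i) = (\<lambda>i. (-1) * P k i)" by (simp add: y'_def)
    also have "l2norm \<dots> = sqrt (S k)" using l2norm_scale[OF Pl2, of "-1" k] Pn[of k] by simp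
    finally show ?thesis .
  qed
  have g0: "(\<lambda>k. cmod (complex_of_real (1 / N k) - 1) * N k + sqrt (S k)) \<longlonglongrightarrow> cmod (complex_of_real (1 / 1) - 1) * 1 + sqrt 0"
    by (intro tendsto_intros N1 S0) simp
  have eps0: "\<epsilon> \<longlonglongrightarrow> 0"
  proof -
    have "\<epsilon> k \<ge> 0" for k unfolding \<epsilon>_def by (rule l2norm_nonneg[OF l2_diff[OF yl2 xD(1)]])
    hence e1: "eventually (\<lambda>k. 0 \<le> \<epsilon> k) sequentially" by simp
    have e2: "eventually (\<lambda>k. \<epsilon> k \<le> cmod (complex_of_real (1 / N k) - 1) * N k + sqrt (S k)) sequentially"
      using eps_le by simp
    have g0': "(\<lambda>k. cmod (complex_of_real (1 / N k) - 1) * N k + sqrt (S k)) \<longlonglongrightarrow> 0" using g0 by simp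
    show ?thesis by (rule real_tendsto_sandwich[OF e1 e2 tendsto_const g0'])
  qed
  have evN: "eventually (\<lambda>k. N k > 0) sequentially" using N1 by (rule order_tendstoD) simp
  have ynorm: "N k > 0 \<Longrightarrow> l2norm (y k) = 1" for k
    using l2norm_scale[OF y'l2, of "complex_of_real (1 / N k)" k] unfolding y_def by (simp add: N_def norm_divide)
  have evj: "eventually (\<lambda>k. cmod (l2inner (T j (y k)) (y k) - \<mu> j) < \<eta> \<and>
      cmod (l2inner (T j (y k)) r) < \<eta> \<and> cmod (l2inner (T j r) (y k)) < \<eta>) sequentially" for j
  proof -
    have b1: "(\<lambda>k. C * \<epsilon> k * 1 + C * 1 * \<epsilon> k + cmod (l2inner (T j (x k)) (x k) - \<mu> j)) \<longlonglongrightarrow> C * 0 * 1 + C * 1 * 0 + cmod (\<mu> j - \<mu> j)"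
      by (intro tendsto_intros eps0 x(2))
    have b2: "(\<lambda>k. C * \<epsilon> k * l2norm r + cmod (l2inner (T j (x k)) r)) \<longlonglongrightarrow> C * 0 * l2norm r + cmod (0::complex)"
      by (intro tendsto_intros eps0 weak_T[OF Tj(1) x(1) r])
    have b3: "(\<lambda>k. C * l2norm r * \<epsilon> k + cmod (l2inner (T j r) (x k))) \<longlonglongrightarrow> C * l2norm r * 0 + cmod (0::complex)"
      by (intro tendsto_intros eps0 bessel_tendsto[OF x(1) bop_l2[OF Tj(1) r]])
    have e1: "eventually (\<lambda>k. C * \<epsilon> k * 1 + C * 1 * \<epsilon> k + cmod (l2inner (T j (x k)) (x k) - \<mu> j) < \<eta>) sequentially"
      using b1 by (rule order_tendstoD) (simp add: eta)
    have e2: "eventually (\<lambda>k. C * \<epsilon> k * l2norm r + cmod (l2inner (T j (x k)) r) < \<eta>) sequentially"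
      using b2 by (rule order_tendstoD) (simp add: eta)
    have e3: "eventually (\<lambda>k. C * l2norm r * \<epsilon> k + cmod (l2inner (T j r) (x k)) < \<eta>) sequentially"
      using b3 by (rule order_tendstoD) (simp add: eta)
    show "eventually (\<lambda>k. cmod (l2inner (T j (y k)) (y k) - \<mu> j) < \<eta> \<and>
      cmod (l2inner (T j (y k)) r) < \<eta> \<and> cmod (l2inner (T j r) (y k)) < \<eta>) sequentially"
      using e1 e2 e3 evN
    proof eventually_elim
      case (elim k)
      have d1: "cmod (l2inner (T j (y k)) (y k) - l2inner (T j (x k)) (x k)) \<le> C * \<epsilon> k * 1 + C * 1 * \<epsilon> k"
        using diag_perturb[OF Tj(1) Tj(2) xD(1)[of k] yl2[of k]] ynorm[OF elim(4)] xD(3)[of k] by (simp add: \<epsilon>_def)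
      have "cmod (l2inner (T j (y k)) (y k) - \<mu> j) \<le> cmod (l2inner (T j (y k)) (y k) - l2inner (T j (x k)) (x k)) + cmod (l2inner (T j (x k)) (x k) - \<mu> j)"
        using norm_triangle_ineq[of "l2inner (T j (y k)) (y k) - l2inner (T j (x k)) (x k)" "l2inner (T j (x k)) (x k) - \<mu> j"] by simp
      hence 1: "cmod (l2inner (T j (y k)) (y k) - \<mu> j) < \<eta>" using d1 elim(1) by linarith
      have 2: "cmod (l2inner (T j (y k)) r) < \<eta>"
        using cross_perturb(1)[OF Tj(1) Tj(2) xD(1)[of k] yl2[of k] r] elim(2) unfolding \<epsilon>_def by (meson le_less_trans)
      have 3: "cmod (l2inner (T j r) (y k)) < \<eta>"
        using cross_perturb(2)[OF Tj(1) Tj(2) xD(1)[of k] yl2[of k] r] elim(3) unfolding \<epsilon>_def by (meson le_less_trans)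
      show ?case using 1 2 3 by blast
    qed
  qed
  have ev: "eventually (\<lambda>k. N k > 0 \<and> (\<forall>j. cmod (l2inner (T j (y k)) (y k) - \<mu> j) < \<eta> \<and>
      cmod (l2inner (T j (y k)) r) < \<eta> \<and> cmod (l2inner (T j r) (y k)) < \<eta>)) sequentially"
    by (rule eventually_conj[OF evN eventually_all_finite[OF evj]])
  then obtain k where k: "N k > 0" "\<forall>j. cmod (l2inner (T j (y k)) (y k) - \<mu> j) < \<eta> \<and>
      cmod (l2inner (T j (y k)) r) < \<eta> \<and> cmod (l2inner (T j r) (y k)) < \<eta>"
    by (auto simp: eventually_sequentially)
  have "l2inner (y k) (y k) = 1" using inner_self[OF yl2] ynorm[OF k(1)] by simp
  moreover have "l2inner (y k) (w a) = 0" if "a \<in> I" for a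
  proof -
    have "l2inner (y k) (w a) = complex_of_real (1 / N k) * l2inner (y' k) (w a)"
      unfolding y_def by (rule inner_scale_left[OF y'l2 wl[OF that]])
    also have "l2inner (y' k) (w a) = 0" unfolding y'_def P_def by (rule resid_orth[OF I that xD(1)])
    finally show ?thesis by simp
  qed
  ultimately show ?thesis using k(2) yl2[of k] by (intro bexI[of _ "y k"]) (auto intro: less_imp_le)
qed



definition olist :: "vec list \<Rightarrow> bool" where "olist U \<longleftrightarrow> orthoset ((!) U) {..<length U}"
definition projL :: "vec list \<Rightarrow> vec \<Rightarrow> vec" where "projL U x = proj ((!) U) {..<length U} x"

lemma olist_l2: "olist U \<Longrightarrow> a < length U \<Longrightarrow> U ! a \<in> l2" by (simp add: olist_def orthoset_def)
lemma olist_inner: "olist U \<Longrightarrow> a < length U \<Longrightarrow> b < length U \<Longrightarrow> l2inner (U!a) (U!b) = (if a = b then 1 else 0)"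
  by (simp add: olist_def orthoset_def)

lemma olist_append: assumes U: "olist U" and u: "u \<in> l2" "l2inner u u = 1" "\<forall>a<length U. l2inner u (U!a) = 0"
  shows "olist (U @ [u])"
  unfolding olist_def orthoset_def
proof (intro conjI ballI)
  fix k assume "k \<in> {..<length (U @ [u])}" thus "(U @ [u]) ! k \<in> l2" using U u by (auto simp: nth_append olist_l2)
next
  fix a b assume ab: "a \<in> {..<length (U @ [u])}" "b \<in> {..<length (U @ [u])}"
  show "l2inner ((U @ [u]) ! a) ((U @ [u]) ! b) = (if a = b then 1 else 0)"
  proof (cases "a < length U"; cases "b < length U")
    assume "a < length U" "b < length U" thus ?thesis using U by (simp add: nth_append olist_inner)
  next
    assume a: "a < length U" and b: "\<not> b < length U"
    hence "b = length U" using ab by simp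
    thus ?thesis using a u inner_conj[OF u(1) olist_l2[OF U a]] by (simp add: nth_append)
  next
    assume a: "\<not> a < length U" and b: "b < length U"
    hence "a = length U" using ab by simp
    thus ?thesis using b u by (simp add: nth_append)
  next
    assume a: "\<not> a < length U" and b: "\<not> b < length U"
    hence "a = length U" "b = length U" using ab by auto
    thus ?thesis using u by (simp add: nth_append)
  qed
qed

lemma projL_l2: "olist U \<Longrightarrow> projL U x \<in> l2"
  unfolding projL_def olist_def by (rule proj_l2)

lemma projL_append: "projL (U @ [u]) x = (\<lambda>i. projL U x i + l2inner x u * u i)"
  unfolding projL_def proj_def by (auto simp: nth_append lessThan_Suc)

lemma inner_projL_left: assumes "olist U" "x \<in> l2" "z \<in> l2" "\<forall>a<length U. l2inner (U!a) z = 0"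
  shows "l2inner (projL U x) z = 0"
  unfolding projL_def proj_def using assms
  by (subst inner_sum_left) (auto simp: olist_l2)

lemma inner_lin_left: assumes "x1 \<in> l2" "x2 \<in> l2" "z \<in> l2"
  shows "l2inner (\<lambda>i. a * x1 i + b * x2 i) z = a * l2inner x1 z + b * l2inner x2 z"
  using assms by (simp add: inner_add_left l2_scale inner_scale_left)

lemma inner_lin_right: assumes "x1 \<in> l2" "x2 \<in> l2" "z \<in> l2"
  shows "l2inner z (\<lambda>i. a * x1 i + b * x2 i) = cnj a * l2inner z x1 + cnj b * l2inner z x2"
  using assms by (simp add: inner_add_right l2_scale inner_scale_right)

lemma l2_lin: "x1 \<in> l2 \<Longrightarrow> x2 \<in> l2 \<Longrightarrow> (\<lambda>i. a * x1 i + b * x2 i) \<in> l2"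
  by (intro l2_add l2_scale)

lemma maxdist_le: fixes a b :: "'n::finite \<Rightarrow> complex"
  assumes "\<And>j. cmod (a j - b j) \<le> X" shows "maxdist a b \<le> X"
  unfolding maxdist_def using assms by (subst Max_le_iff) auto

lemma maxdist_ge: fixes a b :: "'n::finite \<Rightarrow> complex" shows "cmod (a j - b j) \<le> maxdist a b"
  unfolding maxdist_def by (rule Max_ge) auto

lemma maxdist_nonneg: fixes a b :: "'n::finite \<Rightarrow> complex" shows "0 \<le> maxdist a b"
  using maxdist_ge[of a undefined b] by (meson norm_ge_zero order_trans)


lemma lin2_inner: assumes "y \<in> l2" "r \<in> l2" "l2inner y y = 1" "l2inner r r = 1" "l2inner y r = 0" "l2inner r y = 0"
  shows "l2inner (\<lambda>i. a * y i + b * r i) (\<lambda>i. c * y i + d * r i) = a * cnj c + b * cnj d"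
  using assms by (simp add: inner_lin_left[OF assms(1,2) l2_lin] inner_lin_right)

lemma step_lemma:
  fixes T :: "'n::finite \<Rightarrow> op" and \<mu> :: "nat \<Rightarrow> 'n \<Rightarrow> complex"
  assumes T: "\<forall>j. bounded_op (T j)" and C: "\<forall>j. \<forall>x\<in>l2. l2norm (T j x) \<le> C * l2norm x" and C0: "C \<ge> 0"
    and mu: "\<forall>k. \<mu> k \<in> ess_num_range T"
    and U: "olist U" and r: "r \<in> l2" "l2inner r r = 1" "\<forall>a<length U. l2inner r (U!a) = 0"
    and e: "e \<in> l2" "e = (\<lambda>i. projL U e i + l2inner e r * r i)"
    and sig: "0 < \<sigma>" "\<sigma> < 1"
  shows "\<exists>u r'. olist (U @ [u]) \<and> r' \<in> l2 \<and> l2inner r' r' = 1 \<and> (\<forall>a<length (U@[u]). l2inner r' ((U@[u])!a) = 0)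
     \<and> e = (\<lambda>i. projL (U@[u]) e i + l2inner e r' * r' i) \<and> l2inner e r' = complex_of_real (sqrt (1-\<sigma>)) * l2inner e r
     \<and> (\<forall>j. cmod (l2inner (T j u) u - \<mu> (length U) j) \<le> (3 + 2*C) * \<sigma>)"
proof -
  have W: "olist (U @ [r])" by (rule olist_append[OF U r])
  obtain y where y: "y \<in> l2" "l2inner y y = 1" "\<forall>a\<in>{..<length (U@[r])}. l2inner y ((U@[r])!a) = 0"
    "\<forall>j. cmod (l2inner (T j y) y - \<mu> (length U) j) \<le> \<sigma> \<and> cmod (l2inner (T j y) r) \<le> \<sigma> \<and> cmod (l2inner (T j r) y) \<le> \<sigma>"
    using fresh_vector[OF T C mu[rule_format, of "length U"] _ W[unfolded olist_def] r(1) sig(1)] by auto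
  have yU: "l2inner y (U!a) = 0" if "a < length U" for a using y(3) that
    by (metis (no_types, lifting) length_append_singleton lessThan_iff less_SucI nth_append_left)
  have Uy: "l2inner (U!a) y = 0" if "a < length U" for a using inner_conj[OF y(1) olist_l2[OF U that]] yU[OF that] by simp
  have yr: "l2inner y r = 0" using y(3)[rule_format, of "length U"] by simp
  have ry: "l2inner r y = 0" using inner_conj[OF y(1) r(1)] yr by simp
  define c where "c = sqrt (1 - \<sigma>)"
  define s where "s = sqrt \<sigma>"
  have c0: "0 \<le> c" "c \<le> 1" "c\<^sup>2 = 1 - \<sigma>" using sig by (auto simp: c_def)
  have s0: "0 \<le> s" "s \<le> 1" "s\<^sup>2 = \<sigma>" using sig by (auto simp: s_def)
  have cs1: "c * s \<le> 1" using c0 s0 mult_le_one by blast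
  define cC where "cC = complex_of_real c"
  define sC where "sC = complex_of_real s"
  have one: "cC * cC + sC * sC = 1"
  proof -
    have "c * c + s * s = 1" using c0 s0 by (simp add: power2_eq_square)
    hence "complex_of_real (c * c + s * s) = 1" by simp
    thus ?thesis by (simp add: cC_def sC_def)
  qed
  have cnjc: "cnj cC = cC" "cnj sC = sC" by (simp_all add: cC_def sC_def)
  define u where "u = (\<lambda>i. cC * y i + sC * r i)"
  define r' where "r' = (\<lambda>i. (- sC) * y i + cC * r i)"
  have ul2: "u \<in> l2" unfolding u_def by (rule l2_lin[OF y(1) r(1)])
  have r'l2: "r' \<in> l2" unfolding r'_def by (rule l2_lin[OF y(1) r(1)])
  note L2 = lin2_inner[OF y(1) r(1) y(2) r(2) yr ry]
  have uu: "l2inner u u = 1" unfolding u_def using L2 one cnjc by simp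
  have r'r': "l2inner r' r' = 1" unfolding r'_def L2 using one cnjc by (simp add: algebra_simps)
  have r'u: "l2inner r' u = 0" unfolding r'_def u_def L2 using cnjc by (simp add: algebra_simps)
  have uU: "\<forall>a<length U. l2inner u (U!a) = 0"
    using yU r(3) by (auto simp: u_def inner_lin_left[OF y(1) r(1) olist_l2[OF U]])
  have r'U: "\<forall>a<length U. l2inner r' (U!a) = 0"
  proof (intro allI impI)
    fix a assume a: "a < length U"
    show "l2inner r' (U!a) = 0" unfolding r'_def inner_lin_left[OF y(1) r(1) olist_l2[OF U a]]
      using yU[OF a] r(3) a by simp
  qed
  have U': "olist (U @ [u])" by (rule olist_append[OF U ul2 uu uU])
  have r'U': "\<forall>a<length (U@[u]). l2inner r' ((U@[u])!a) = 0"
    using r'U r'u by (auto simp: nth_append less_Suc_eq)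
  have ey: "l2inner e y = 0"
  proof -
    have "l2inner e y = l2inner (\<lambda>i. projL U e i + l2inner e r * r i) y" using e(2) by (rule arg_cong)
    also have "\<dots> = l2inner (projL U e) y + l2inner e r * l2inner r y"
      by (simp add: inner_add_left[OF projL_l2[OF U] l2_scale[OF r(1)] y(1)] inner_scale_left[OF r(1) y(1)])
    also have "\<dots> = 0" using inner_projL_left[OF U e(1) y(1)] Uy ry by simp
    finally show ?thesis .
  qed
  have eu: "l2inner e u = sC * l2inner e r"
    unfolding u_def inner_lin_right[OF y(1) r(1) e(1)] using ey cnjc by simp
  have er': "l2inner e r' = cC * l2inner e r"
    unfolding r'_def inner_lin_right[OF y(1) r(1) e(1)] using ey cnjc by simp
  have inv: "e = (\<lambda>i. projL (U@[u]) e i + l2inner e r' * r' i)"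
  proof
    fix i
    have "projL (U@[u]) e i + l2inner e r' * r' i
        = projL U e i + l2inner e r * (cC * cC + sC * sC) * r i"
      unfolding projL_append eu er' unfolding u_def r'_def by (simp add: algebra_simps)
    also have "\<dots> = e i" using fun_cong[OF e(2), of i] one by simp
    finally show "e i = projL (U@[u]) e i + l2inner e r' * r' i" by simp
  qed
  have err: "cmod (l2inner (T j u) u - \<mu> (length U) j) \<le> (3 + 2*C) * \<sigma>" for j
  proof -
    have Tj: "bounded_op (T j)" using T by simp
    have Tyl: "T j y \<in> l2" "T j r \<in> l2" using bop_l2[OF Tj] y(1) r(1) by auto
    have Tu: "T j u = (\<lambda>i. cC * T j y i + sC * T j r i)"
      unfolding u_def by (simp add: bop_add[OF Tj l2_scale[OF y(1)] l2_scale[OF r(1)]] bop_scale[OF Tj] y(1) r(1))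
    define a where "a = l2inner (T j y) y - \<mu> (length U) j"
    define b1 where "b1 = l2inner (T j y) r"
    define b2 where "b2 = l2inner (T j r) y"
    define d where "d = l2inner (T j r) r - \<mu> (length U) j"
    have "l2inner (T j u) u = cC * (cC * l2inner (T j y) y + sC * b1) + sC * (cC * b2 + sC * l2inner (T j r) r)"
      unfolding Tu inner_lin_left[OF Tyl ul2] unfolding u_def inner_lin_right[OF y(1) r(1) Tyl(1)]
        inner_lin_right[OF y(1) r(1) Tyl(2)] cnjc b1_def b2_def by simp
    also have "\<dots> = (cC * cC) * a + (cC * sC) * b1 + (sC * cC) * b2 + (sC * sC) * d + (cC * cC + sC * sC) * \<mu> (length U) j"
      by (simp add: a_def d_def algebra_simps)
    finally have eq: "l2inner (T j u) u - \<mu> (length U) j = (cC * cC) * a + (cC * sC) * b1 + (sC * cC) * b2 + (sC * sC) * d"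
      using one by simp
    have ha: "cmod a \<le> \<sigma>" "cmod b1 \<le> \<sigma>" "cmod b2 \<le> \<sigma>" using y(4) by (auto simp: a_def b1_def b2_def)
    have hd: "cmod d \<le> 2 * C"
    proof -
      have "cmod d \<le> cmod (l2inner (T j r) r) + cmod (\<mu> (length U) j)" unfolding d_def by (rule norm_triangle_ineq4)
      also have "\<dots> \<le> C + C"
        using diag_bound[OF Tj _ r(1,2), of C] C ess_bound[OF T C mu[rule_format]] by (intro add_mono) auto
      finally show ?thesis by simp
    qed
    have "cmod (l2inner (T j u) u - \<mu> (length U) j) \<le> cmod ((cC * cC) * a) + cmod ((cC * sC) * b1) + cmod ((sC * cC) * b2) + cmod ((sC * sC) * d)"
      unfolding eq by (intro order_trans[OF norm_triangle_ineq] add_mono order_refl)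
    also have "\<dots> = (c * c) * cmod a + (c * s) * cmod b1 + (s * c) * cmod b2 + (s * s) * cmod d"
      using c0 s0 by (simp add: cC_def sC_def norm_mult)
    also have "\<dots> \<le> 1 * \<sigma> + 1 * \<sigma> + 1 * \<sigma> + \<sigma> * (2 * C)"
    proof (intro add_mono mult_mono)
      show "c * c \<le> 1" using c0 by (simp add: mult_le_one)
      show "c * s \<le> 1" "s * c \<le> 1" using cs1 by (simp_all add: mult.commute)
      show "s * s \<le> \<sigma>" using s0 by (simp add: power2_eq_square)
    qed (use ha hd c0 s0 sig C0 in auto)
    finally show ?thesis by (simp add: algebra_simps)
  qed
  show ?thesis
    by (intro exI[of _ u] exI[of _ r'] conjI U' r'l2 r'r' r'U' inv allI err) (simp add: er' cC_def c_def)
qed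


lemma steps_lemma:
  fixes T :: "'n::finite \<Rightarrow> op" and \<mu> :: "nat \<Rightarrow> 'n \<Rightarrow> complex"
  assumes T: "\<forall>j. bounded_op (T j)" and C: "\<forall>j. \<forall>x\<in>l2. l2norm (T j x) \<le> C * l2norm x" and C0: "C \<ge> 0"
    and mu: "\<forall>k. \<mu> k \<in> ess_num_range T"
    and U: "olist U" and r: "r \<in> l2" "l2inner r r = 1" "\<forall>a<length U. l2inner r (U!a) = 0"
    and e: "e \<in> l2" "e = (\<lambda>i. projL U e i + l2inner e r * r i)"
    and sig: "0 < \<sigma>" "\<sigma> < 1"
  shows "\<exists>V r'. length V = n \<and> olist (U @ V) \<and> r' \<in> l2 \<and> l2inner r' r' = 1 \<and> (\<forall>a<length (U@V). l2inner r' ((U@V)!a) = 0)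
     \<and> e = (\<lambda>i. projL (U@V) e i + l2inner e r' * r' i) \<and> l2inner e r' = (complex_of_real (sqrt (1-\<sigma>)))^n * l2inner e r
     \<and> (\<forall>s<n. \<forall>j. cmod (l2inner (T j (V!s)) (V!s) - \<mu> (length U + s) j) \<le> (3 + 2*C) * \<sigma>)"
proof (induction n)
  case 0 show ?case by (rule exI[of _ "[]"], rule exI[of _ r]) (use U r e in auto)
next
  case (Suc n)
  then obtain V r' where V: "length V = n" "olist (U @ V)" "r' \<in> l2" "l2inner r' r' = 1" "\<forall>a<length (U@V). l2inner r' ((U@V)!a) = 0"
     "e = (\<lambda>i. projL (U@V) e i + l2inner e r' * r' i)" "l2inner e r' = (complex_of_real (sqrt (1-\<sigma>)))^n * l2inner e r"
     "\<forall>s<n. \<forall>j. cmod (l2inner (T j (V!s)) (V!s) - \<mu> (length U + s) j) \<le> (3 + 2*C) * \<sigma>" by blast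
  obtain u r'' where u: "olist ((U@V) @ [u])" "r'' \<in> l2" "l2inner r'' r'' = 1" "\<forall>a<length ((U@V)@[u]). l2inner r'' (((U@V)@[u])!a) = 0"
     "e = (\<lambda>i. projL ((U@V)@[u]) e i + l2inner e r'' * r'' i)" "l2inner e r'' = complex_of_real (sqrt (1-\<sigma>)) * l2inner e r'"
     "\<forall>j. cmod (l2inner (T j u) u - \<mu> (length (U@V)) j) \<le> (3 + 2*C) * \<sigma>"
    using step_lemma[OF T C C0 mu V(2) V(3) V(4) V(5) e(1) V(6) sig] by blast
  have err: "\<forall>s<Suc n. \<forall>j. cmod (l2inner (T j ((V@[u])!s)) ((V@[u])!s) - \<mu> (length U + s) j) \<le> (3 + 2*C) * \<sigma>"
  proof (intro allI impI)
    fix s j assume s: "s < Suc n"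
    show "cmod (l2inner (T j ((V@[u])!s)) ((V@[u])!s) - \<mu> (length U + s) j) \<le> (3 + 2*C) * \<sigma>"
    proof (cases "s < n")
      case True thus ?thesis using V(8) V(1) by (simp add: nth_append)
    next
      case False hence "s = n" using s by simp
      thus ?thesis using u(7) V(1) by (simp add: nth_append)
    qed
  qed
  show ?case
    by (rule exI[of _ "V @ [u]"], rule exI[of _ r'']) (use u V(1,7) err in \<open>simp add: mult.assoc\<close>)
qed



lemma param_exists: fixes p A :: real assumes "p > 1" "A > 0"
  shows "\<exists>N::nat. N \<ge> 2 \<and> real (2*m+2) * A powr p * real N powr (1-p) \<le> (1/2)^m"
proof -
  have "((\<lambda>N. real N powr (1-p)) \<longlongrightarrow> 0) sequentially"
    by (rule tendsto_neg_powr) (use assms filterlim_real_sequentially in auto)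
  hence "((\<lambda>N. real (2*m+2) * A powr p * real N powr (1-p)) \<longlongrightarrow> real (2*m+2) * A powr p * 0) sequentially"
    by (intro tendsto_intros)
  hence "eventually (\<lambda>N. real (2*m+2) * A powr p * real N powr (1-p) < (1/2)^m) sequentially"
    by (rule order_tendstoD) simp
  moreover have "eventually (\<lambda>N::nat. N \<ge> 2) sequentially" by (rule eventually_ge_at_top)
  ultimately have "eventually (\<lambda>N::nat. N \<ge> 2 \<and> real (2*m+2) * A powr p * real N powr (1-p) < (1/2)^m) sequentially"
    by eventually_elim auto
  then obtain N where "N \<ge> 2" "real (2*m+2) * A powr p * real N powr (1-p) < (1/2)^m"
    by (auto simp: eventually_sequentially)
  thus ?thesis by (intro exI[of _ N]) auto
qed

lemma decay: assumes "N \<ge> (1::nat)" shows "sqrt (1 - 1 / real N) ^ ((2*m+2)*N) \<le> 1 / real (m+1)"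
proof -
  define q where "q = 1 - 1 / real N"
  have q0: "0 \<le> q" using assms unfolding q_def by (simp add: field_simps)
  have q1: "q \<le> exp (- (1 / real N))" unfolding q_def using exp_ge_add_one_self[of "- (1 / real N)"] by simp
  have "q ^ N \<le> exp (- (1 / real N)) ^ N" by (rule power_mono[OF q1 q0])
  also have "\<dots> = exp (real N * (- (1 / real N)))" by (rule exp_of_nat_mult[symmetric])
  also have "\<dots> = exp (-1)" using assms by simp
  finally have qN: "q ^ N \<le> exp (-1)" .
  have "q ^ ((2*m+2)*N) = (q ^ N) ^ (2*m+2)" by (metis power_mult mult.commute)
  also have "\<dots> \<le> exp (-1) ^ (2*m+2)" by (rule power_mono[OF qN]) (simp add: q0)
  also have "\<dots> = exp (real (2*m+2) * (-1))" by (rule exp_of_nat_mult[symmetric])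
  also have "\<dots> = exp (real 2 * (- real (m+1)))" by simp
  also have "\<dots> = exp (- real (m+1)) ^ 2" by (rule exp_of_nat_mult)
  finally have "sqrt (q ^ ((2*m+2)*N)) \<le> sqrt (exp (- real (m+1)) ^ 2)" by (rule real_sqrt_le_mono)
  hence "sqrt q ^ ((2*m+2)*N) \<le> exp (- real (m+1))" by (simp add: real_sqrt_power)
  also have "exp (- real (m+1)) \<le> 1 / real (m+1)"
  proof -
    have "1 + real (m+1) \<le> exp (real (m+1))" by (rule exp_ge_add_one_self)
    hence le: "real (m+1) \<le> exp (real (m+1))" by simp
    have "exp (- real (m+1)) = 1 / exp (real (m+1))" by (metis exp_minus inverse_eq_divide)
    also have "\<dots> \<le> 1 / real (m+1)" by (rule divide_left_mono[OF le]) auto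
    finally show ?thesis .
  qed
  finally show ?thesis by (simp add: q_def)
qed

lemma errsum_eq: fixes A p :: real assumes "N \<ge> (1::nat)" "A > 0"
  shows "real ((2*m+2)*N) * (A * (1 / real N)) powr p = real (2*m+2) * A powr p * real N powr (1-p)"
proof -
  have N0: "real N > 0" using assms by simp
  have "(A * (1 / real N)) powr p = A powr p / real N powr p"
    using powr_divide[of A "real N" p] by simp
  moreover have "real N powr (1 - p) = real N / real N powr p" using N0 by (simp add: powr_diff)
  ultimately show ?thesis by (simp add: field_simps)
qed


lemma init_r:
  fixes T :: "'n::finite \<Rightarrow> op"
  assumes T: "\<forall>j. bounded_op (T j)" and C: "\<forall>j. \<forall>x\<in>l2. l2norm (T j x) \<le> C * l2norm x"
    and mu: "\<mu>0 \<in> ess_num_range T" and U: "olist U" and e: "e \<in> l2" "l2inner e e = 1"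
  shows "\<exists>r. r \<in> l2 \<and> l2inner r r = 1 \<and> (\<forall>a<length U. l2inner r (U!a) = 0) \<and>
     e = (\<lambda>i. projL U e i + l2inner e r * r i) \<and> cmod (l2inner e r) \<le> 1"
proof -
  define g where "g = (\<lambda>i. e i - projL U e i)"
  have P: "projL U e \<in> l2" by (rule projL_l2[OF U])
  have gl2: "g \<in> l2" unfolding g_def by (rule l2_diff[OF e(1) P])
  have gU: "l2inner g (U!a) = 0" if "a < length U" for a
    unfolding g_def projL_def using resid_orth[of "{..<length U}" "(!) U" a e] U[unfolded olist_def] that e by simp
  have Ug: "l2inner (U!a) g = 0" if "a < length U" for a using inner_conj[OF gl2 olist_l2[OF U that]] gU[OF that] by simp
  have en: "l2norm e = 1" by (rule unit_norm[OF e])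
  have cs: "cmod (l2inner e r) \<le> 1" if "r \<in> l2" "l2inner r r = 1" for r
    using cauchy_schwarz[OF e(1) that(1)] unit_norm[OF that] en by simp
  show ?thesis
  proof (cases "l2norm g = 0")
    case True
    hence g0: "g = (\<lambda>_. 0)" using l2norm_zero_iff[OF gl2] by simp
    obtain r where r: "r \<in> l2" "l2inner r r = 1" "\<forall>a\<in>{..<length U}. l2inner r (U!a) = 0"
      using fresh_vector[OF T C mu _ U[unfolded olist_def] l2_zero, of 1] by auto
    have Ur: "l2inner (U!a) r = 0" if "a < length U" for a using inner_conj[OF r(1) olist_l2[OF U that]] r(3) that by simp
    have eP: "e = projL U e"
    proof
      fix i show "e i = projL U e i" using fun_cong[OF g0, of i] by (simp add: g_def)
    qed
    have er: "l2inner e r = 0" using inner_projL_left[OF U e(1) r(1)] Ur eP by simp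
    show ?thesis using r er eP cs[OF r(1,2)] by (intro exI[of _ r]) auto
  next
    case False
    define ng where "ng = l2norm g"
    have ng0: "ng > 0" using False l2norm_nonneg[OF gl2] by (simp add: ng_def)
    define r where "r = (\<lambda>i. complex_of_real (1 / ng) * g i)"
    have rl2: "r \<in> l2" unfolding r_def by (rule l2_scale[OF gl2])
    have rn: "l2norm r = 1" unfolding r_def using l2norm_scale[OF gl2, of "complex_of_real (1 / ng)"] ng0
      by (simp add: ng_def norm_divide)
    have rr: "l2inner r r = 1" using inner_self[OF rl2] rn by simp
    have rU: "\<forall>a<length U. l2inner r (U!a) = 0"
    proof (intro allI impI)
      fix a assume a: "a < length U"
      show "l2inner r (U!a) = 0" unfolding r_def inner_scale_left[OF gl2 olist_l2[OF U a]] using gU[OF a] by simp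
    qed
    have eg: "l2inner e g = complex_of_real (ng\<^sup>2)"
    proof -
      have "e = (\<lambda>i. g i + projL U e i)" by (simp add: g_def)
      hence "l2inner e g = l2inner (\<lambda>i. g i + projL U e i) g" by (rule arg_cong)
      also have "\<dots> = l2inner g g + l2inner (projL U e) g" by (rule inner_add_left[OF gl2 P gl2])
      also have "l2inner (projL U e) g = 0" by (rule inner_projL_left[OF U e(1) gl2]) (use Ug in auto)
      finally show ?thesis using inner_self[OF gl2] by (simp add: ng_def)
    qed
    have er: "l2inner e r = complex_of_real ng"
      unfolding r_def inner_scale_right[OF gl2 e(1)] eg using ng0 by (simp add: power2_eq_square)
    have inv: "e = (\<lambda>i. projL U e i + l2inner e r * r i)"
    proof
      fix i show "e i = projL U e i + l2inner e r * r i" unfolding er unfolding r_def g_def using ng0 by simp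
    qed
    show ?thesis using rl2 rr rU inv cs[OF rl2 rr] by blast
  qed
qed


lemma stage_lemma:
  fixes T :: "'n::finite \<Rightarrow> op" and \<mu> :: "nat \<Rightarrow> 'n \<Rightarrow> complex"
  assumes T: "\<forall>j. bounded_op (T j)" and C: "\<forall>j. \<forall>x\<in>l2. l2norm (T j x) \<le> C * l2norm x" and C0: "C \<ge> 0"
    and mu: "\<forall>k. \<mu> k \<in> ess_num_range T" and U: "olist U" and p: "p > 1"
  shows "\<exists>V. V \<noteq> [] \<and> olist (U@V) \<and>
    (\<Sum>s<length V. (maxdist (\<lambda>j. l2inner (T j (V!s)) (V!s)) (\<mu> (length U + s))) powr p) \<le> (1/2)^m \<and>
    l2norm (\<lambda>k. evec i k - projL (U@V) (evec i) k) \<le> 1 / real (m+1)"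
proof -
  define A where "A = 3 + 2 * C"
  have A0: "A > 0" using C0 by (simp add: A_def)
  obtain N :: nat where N: "N \<ge> 2" "real (2*m+2) * A powr p * real N powr (1-p) \<le> (1/2)^m"
    using param_exists[OF p A0] by blast
  define \<sigma> where "\<sigma> = 1 / real N"
  have sig: "0 < \<sigma>" "\<sigma> < 1" using N(1) by (auto simp: \<sigma>_def)
  define e where "e = evec i"
  have e: "e \<in> l2" "l2inner e e = 1" by (auto simp: e_def inner_evec_right)
  obtain r0 where r0: "r0 \<in> l2" "l2inner r0 r0 = 1" "\<forall>a<length U. l2inner r0 (U!a) = 0"
    "e = (\<lambda>i. projL U e i + l2inner e r0 * r0 i)" "cmod (l2inner e r0) \<le> 1"
    using init_r[OF T C mu[rule_format, of 0] U e] by blast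
  define n where "n = (2*m+2)*N"
  obtain V r' where V: "length V = n" "olist (U @ V)" "r' \<in> l2" "l2inner r' r' = 1"
     "e = (\<lambda>i. projL (U@V) e i + l2inner e r' * r' i)" "l2inner e r' = (complex_of_real (sqrt (1-\<sigma>)))^n * l2inner e r0"
     "\<forall>s<n. \<forall>j. cmod (l2inner (T j (V!s)) (V!s) - \<mu> (length U + s) j) \<le> (3 + 2*C) * \<sigma>"
    using steps_lemma[OF T C C0 mu U r0(1,2,3) e(1) r0(4) sig, of n] by blast
  have Vne: "V \<noteq> []" using V(1) N(1) by (auto simp: n_def)
  have res: "l2norm (\<lambda>k. evec i k - projL (U@V) (evec i) k) \<le> 1 / real (m+1)"
  proof -
    have "(\<lambda>k. evec i k - projL (U@V) (evec i) k) = (\<lambda>k. l2inner e r' * r' k)"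
    proof
      fix k show "evec i k - projL (U@V) (evec i) k = l2inner e r' * r' k"
        using fun_cong[OF V(5), of k] by (simp add: e_def)
    qed
    hence "l2norm (\<lambda>k. evec i k - projL (U@V) (evec i) k) = cmod (l2inner e r')"
      using l2norm_scale[OF V(3), of "l2inner e r'"] unit_norm[OF V(3,4)] by simp
    also have "\<dots> = sqrt (1-\<sigma>) ^ n * cmod (l2inner e r0)" using sig by (simp add: V(6) norm_mult norm_power)
    also have "\<dots> \<le> sqrt (1-\<sigma>) ^ n * 1" by (rule mult_left_mono[OF r0(5)]) (use sig in simp)
    also have "\<dots> \<le> 1 / real (m+1)" using decay[of N m] N(1) by (simp add: n_def \<sigma>_def)
    finally show ?thesis .
  qed
  have "(\<Sum>s<length V. (maxdist (\<lambda>j. l2inner (T j (V!s)) (V!s)) (\<mu> (length U + s))) powr p)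
      \<le> (\<Sum>s<n. (A * \<sigma>) powr p)"
    unfolding V(1)
  proof (rule sum_mono)
    fix s assume "s \<in> {..<n}"
    hence "maxdist (\<lambda>j. l2inner (T j (V!s)) (V!s)) (\<mu> (length U + s)) \<le> A * \<sigma>"
      using V(7) by (intro maxdist_le) (auto simp: A_def)
    thus "(maxdist (\<lambda>j. l2inner (T j (V!s)) (V!s)) (\<mu> (length U + s))) powr p \<le> (A * \<sigma>) powr p"
      by (intro powr_mono2) (use p maxdist_nonneg in auto)
  qed
  also have "\<dots> = real n * (A * (1 / real N)) powr p" by (simp add: \<sigma>_def)
  also have "\<dots> = real (2*m+2) * A powr p * real N powr (1-p)"
    unfolding n_def by (rule errsum_eq) (use N(1) A0 in auto)
  also have "\<dots> \<le> (1/2)^m" by (rule N(2))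
  finally show ?thesis using Vne V(2) res by blast
qed



lemma sum_split_nat: "(\<Sum>k<a+b. f k) = (\<Sum>k<a. f k) + (\<Sum>s<(b::nat). f (a+s))"
  by (induct b) (auto simp: algebra_simps)

lemma construct_basis:
  fixes T :: "'n::finite \<Rightarrow> op" and \<mu> :: "nat \<Rightarrow> 'n \<Rightarrow> complex"
  assumes T: "\<forall>j. bounded_op (T j)" and C: "\<forall>j. \<forall>x\<in>l2. l2norm (T j x) \<le> C * l2norm x" and C0: "C \<ge> 0"
    and mu: "\<forall>k. \<mu> k \<in> ess_num_range T" and p: "p > 1"
  shows "\<exists>u. onb u \<and> summable (\<lambda>k. (maxdist (\<lambda>j. l2inner (T j (u k)) (u k)) (\<mu> k)) powr p)"
proof -
  define err where "err = (\<lambda>k v. (maxdist (\<lambda>j. l2inner (T j v) v) (\<mu> k)) powr p)"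
  have err0: "err k v \<ge> 0" for k v by (simp add: err_def)
  define idx where "idx = (\<lambda>m. fst (prod_decode m))"
  define P where "P = (\<lambda>m U. olist U \<and> length U \<ge> m \<and> (\<Sum>k<length U. err k (U!k)) \<le> 2 - 2 * (1/2)^m)"
  define Q where "Q = (\<lambda>m U U'. \<exists>V. U' = U @ V \<and>
      l2norm (\<lambda>k. evec (idx m) k - projL U' (evec (idx m)) k) \<le> 1 / real (m+1))"
  have P0: "P 0 []" by (simp add: P_def olist_def orthoset_def)
  have PQ: "\<exists>U'. P (Suc m) U' \<and> Q m U U'" if "P m U" for m U
  proof -
    have U: "olist U" using that by (simp add: P_def)
    obtain V where V: "V \<noteq> []" "olist (U@V)"
      "(\<Sum>s<length V. (maxdist (\<lambda>j. l2inner (T j (V!s)) (V!s)) (\<mu> (length U + s))) powr p) \<le> (1/2)^m"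
      "l2norm (\<lambda>k. evec (idx m) k - projL (U@V) (evec (idx m)) k) \<le> 1 / real (m+1)"
      using stage_lemma[OF T C C0 mu U p, of m "idx m"] by blast
    have "(\<Sum>k<length (U@V). err k ((U@V)!k)) = (\<Sum>k<length U. err k (U!k)) + (\<Sum>s<length V. err (length U + s) (V!s))"
      by (simp add: sum_split_nat nth_append)
    also have "\<dots> \<le> (2 - 2 * (1/2)^m) + (1/2)^m" using that V(3) by (intro add_mono) (auto simp: P_def err_def)
    also have "\<dots> = 2 - 2 * (1/2)^(Suc m)" by simp
    moreover have "Suc m \<le> length (U@V)" using that V(1) by (cases V) (auto simp: P_def)
    ultimately have "P (Suc m) (U@V)" using that V by (auto simp: P_def Suc_le_eq)
    moreover have "Q m U (U@V)" using V(4) by (auto simp: Q_def)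
    ultimately show ?thesis by blast
  qed
  obtain Us where Us: "\<And>m. P m (Us m)" "\<And>m. Q m (Us m) (Us (Suc m))"
    using dependent_nat_choice[of P Q] P0 PQ by blast
  have pref: "\<exists>W. Us (m + d) = Us m @ W" for m d
  proof (induction d)
    case 0 show ?case by simp
  next
    case (Suc d)
    then obtain W where W: "Us (m + d) = Us m @ W" by blast
    obtain V where "Us (Suc (m + d)) = Us (m + d) @ V" using Us(2)[of "m+d"] by (auto simp: Q_def)
    thus ?case using W by auto
  qed
  define u where "u = (\<lambda>k. Us (Suc k) ! k)"
  have lenUs: "length (Us m) \<ge> m" for m using Us(1)[of m] by (simp add: P_def)
  have nth_Us: "Us m ! k = u k" if "k < length (Us m)" for m k
  proof -
    obtain W1 where W1: "Us (m + Suc k) = Us m @ W1" using pref by blast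
    obtain W2 where W2: "Us (Suc k + m) = Us (Suc k) @ W2" using pref by blast
    have "k < length (Us (Suc k))" using lenUs[of "Suc k"] by simp
    hence "Us (Suc k + m) ! k = u k" using W2 by (simp add: nth_append u_def)
    moreover have "Us (m + Suc k) ! k = Us m ! k" using W1 that by (simp add: nth_append)
    ultimately show ?thesis by (simp add: add.commute)
  qed
  have ortho: "orthonormal_seq u"
    unfolding orthonormal_seq_def
  proof (intro conjI allI)
    fix k
    have "k < length (Us (Suc k))" using lenUs[of "Suc k"] by simp
    thus "u k \<in> l2" using Us(1)[of "Suc k"] olist_l2 by (auto simp: P_def u_def)
  next
    fix j k
    define m where "m = Suc (max j k)"
    have jk: "j < length (Us m)" "k < length (Us m)" using lenUs[of m] by (auto simp: m_def)
    have "l2inner (Us m ! j) (Us m ! k) = (if j = k then 1 else 0)"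
      using Us(1)[of m] jk by (auto simp: P_def olist_inner)
    thus "l2inner (u j) (u k) = (if j = k then 1 else 0)" using nth_Us jk by simp
  qed
  have complete: "y = (\<lambda>_. 0)" if y: "y \<in> l2" "\<forall>k. l2inner y (u k) = 0" for y
  proof
    fix i
    have bound: "cmod (y i) * real (N+1) \<le> l2norm y" for N
    proof -
      define m where "m = prod_encode (i, N)"
      have im: "idx m = i" by (simp add: idx_def m_def)
      have mN: "N \<le> m" unfolding m_def by (rule le_prod_encode_2)
      obtain V where V: "Us (Suc m) = Us m @ V"
        "l2norm (\<lambda>k. evec i k - projL (Us (Suc m)) (evec i) k) \<le> 1 / real (m+1)"
        using Us(2)[of m] by (auto simp: Q_def im)
      define W where "W = Us (Suc m)"
      have W: "olist W" using Us(1)[of "Suc m"] by (simp add: P_def W_def)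
      have yW: "l2inner y (projL W (evec i)) = 0"
      proof -
        have "l2inner y (projL W (evec i)) = (\<Sum>k<length W. cnj (l2inner (evec i) (W!k)) * l2inner y (W!k))"
          unfolding projL_def proj_def by (rule inner_sum_right) (use W olist_l2 y in auto)
        also have "\<dots> = 0" using y(2) nth_Us by (auto simp: W_def)
        finally show ?thesis .
      qed
      have d: "(\<lambda>k. evec i k - projL W (evec i) k) \<in> l2" by (rule l2_diff[OF l2_evec projL_l2[OF W]])
      have "y i = cnj (l2inner (evec i) y)" using inner_evec_left[OF y(1)] by simp
      also have "l2inner (evec i) y = cnj (l2inner y (evec i))" by (rule inner_conj[OF y(1) l2_evec])
      also have "l2inner y (evec i) = l2inner y (\<lambda>k. evec i k - projL W (evec i) k)"
        using inner_diff_right[OF l2_evec projL_l2[OF W] y(1)] yW by simp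
      finally have "cmod (y i) \<le> l2norm y * l2norm (\<lambda>k. evec i k - projL W (evec i) k)"
        using cauchy_schwarz[OF y(1) d] by simp
      also have "\<dots> \<le> l2norm y * (1 / real (m+1))"
        by (rule mult_left_mono) (use V(2) l2norm_nonneg[OF y(1)] in \<open>auto simp: W_def\<close>)
      also have "\<dots> \<le> l2norm y * (1 / real (N+1))"
        by (rule mult_left_mono) (use mN l2norm_nonneg[OF y(1)] in \<open>auto simp: divide_simps\<close>)
      finally show ?thesis by (simp add: field_simps)
    qed
    show "y i = 0"
    proof (rule ccontr)
      assume "y i \<noteq> 0"
      hence "cmod (y i) > 0" by simp
      then obtain n where n: "l2norm y < real n * cmod (y i)" using reals_Archimedean3 by blast
      have "cmod (y i) * real (n+1) \<le> l2norm y" by (rule bound)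
      thus False using n \<open>cmod (y i) > 0\<close> by (simp add: algebra_simps)
    qed
  qed
  have onb: "onb u" unfolding onb_def using ortho complete by blast
  have "summable (\<lambda>k. err k (u k))"
  proof (rule summableI_nonneg_bounded[OF err0])
    fix n
    have "(\<Sum>k<n. err k (u k)) \<le> (\<Sum>k<length (Us n). err k (u k))"
      by (rule sum_mono2) (use lenUs[of n] err0 in auto)
    also have "\<dots> = (\<Sum>k<length (Us n). err k (Us n ! k))" using nth_Us by simp
    also have "\<dots> \<le> 2 - 2 * (1/2)^n" using Us(1)[of n] by (simp add: P_def)
    also have "\<dots> \<le> 2" by simp
    finally show "(\<Sum>k<n. err k (u k)) \<le> 2" .
  qed
  thus ?thesis using onb by (auto simp: err_def)
qed



lemma coord_summable: assumes u: "orthonormal_seq u" and c: "summable (\<lambda>k. (cmod (c k))\<^sup>2)"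
  shows "summable (\<lambda>k. cmod (c k * u k i))" "summable (\<lambda>k. c k * u k i)"
proof -
  have "summable (\<lambda>k. (cmod (l2inner (evec i) (u k)))\<^sup>2)" by (rule bessel_seq(1)[OF u l2_evec])
  moreover have "cmod (l2inner (evec i) (u k)) = cmod (u k i)" for k
    using inner_evec_left[OF orthonormal_seqD(1)[OF u, of k], of i] by simp
  ultimately have s2: "summable (\<lambda>k. (cmod (u k i))\<^sup>2)" by simp
  show "summable (\<lambda>k. cmod (c k * u k i))"
    using summable_mult_l2(1)[OF c s2] by (simp add: norm_mult)
  thus "summable (\<lambda>k. c k * u k i)" by (rule summable_norm_cancel)
qed

lemma synthesis: assumes u: "orthonormal_seq u" and c: "summable (\<lambda>k. (cmod (c k))\<^sup>2)"
  shows "(\<lambda>i. \<Sum>k. c k * u k i) \<in> l2" "(l2norm (\<lambda>i. \<Sum>k. c k * u k i))\<^sup>2 \<le> (\<Sum>k. (cmod (c k))\<^sup>2)"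
proof -
  define w where "w = (\<lambda>i. \<Sum>k. c k * u k i)"
  define B where "B = (\<Sum>k. (cmod (c k))\<^sup>2)"
  have B0: "B \<ge> 0" unfolding B_def by (rule suminf_nonneg[OF c]) simp
  have ul2: "u k \<in> l2" for k using orthonormal_seqD(1)[OF u] .
  have b: "(\<Sum>i<N. (cmod (w i))\<^sup>2) \<le> B" for N
  proof -
    define v where "v = (\<lambda>i. if i < N then w i else 0)"
    have vl2: "v \<in> l2" unfolding v_def by (rule l2_finsupp[of N]) auto
    define S where "S = (\<Sum>i<N. (cmod (w i))\<^sup>2)"
    have S0: "S \<ge> 0" unfolding S_def by (rule sum_nonneg) simp
    have uv: "l2inner (u k) v = (\<Sum>i<N. u k i * cnj (v i))" for k
      unfolding l2inner_def by (rule suminf_finite) (auto simp: v_def)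
    have "complex_of_real S = (\<Sum>i<N. w i * cnj (v i))"
      unfolding S_def v_def by (simp add: complex_norm_square del: of_real_power)
    also have "\<dots> = (\<Sum>i<N. \<Sum>k. c k * u k i * cnj (v i))"
      unfolding w_def by (intro sum.cong refl suminf_mult2 coord_summable(2)[OF u c])
    also have "\<dots> = (\<Sum>k. \<Sum>i<N. c k * u k i * cnj (v i))"
      by (rule suminf_sum[symmetric]) (intro summable_mult2 coord_summable(2)[OF u c])
    also have "\<dots> = (\<Sum>k. c k * l2inner (u k) v)" by (simp add: uv sum_distrib_left mult.assoc)
    finally have Seq: "complex_of_real S = (\<Sum>k. c k * l2inner (u k) v)" .
    have sI: "summable (\<lambda>k. (cmod (l2inner (u k) v))\<^sup>2)"
    proof -
      have "cmod (l2inner (u k) v) = cmod (l2inner v (u k))" for k using inner_conj[OF vl2 ul2[of k]] by simp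
      thus ?thesis using bessel_seq(1)[OF u vl2] by simp
    qed
    have sIle: "(\<Sum>k. (cmod (l2inner (u k) v))\<^sup>2) \<le> (l2norm v)\<^sup>2"
    proof -
      have "cmod (l2inner (u k) v) = cmod (l2inner v (u k))" for k using inner_conj[OF vl2 ul2[of k]] by simp
      thus ?thesis using bessel_seq(2)[OF u vl2] by simp
    qed
    have vn: "(l2norm v)\<^sup>2 = S"
    proof -
      have "(l2norm v)\<^sup>2 = (\<Sum>k. (cmod (v k))\<^sup>2)" by (rule l2norm_sq[OF vl2])
      also have "\<dots> = (\<Sum>k<N. (cmod (v k))\<^sup>2)" by (rule suminf_finite) (auto simp: v_def)
      finally show ?thesis by (simp add: S_def v_def)
    qed
    have "S = cmod (complex_of_real S)" using S0 by simp
    also have "\<dots> \<le> (\<Sum>k. cmod (c k * l2inner (u k) v))"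
      unfolding Seq by (rule summable_norm)
        (use summable_mult_l2(1)[OF c sI] in \<open>simp add: norm_mult\<close>)
    also have "\<dots> = (\<Sum>k. cmod (c k) * cmod (l2inner (u k) v))" by (simp add: norm_mult)
    also have "\<dots> \<le> sqrt B * sqrt (\<Sum>k. (cmod (l2inner (u k) v))\<^sup>2)"
      unfolding B_def by (rule summable_mult_l2(2)[OF c sI]) auto
    also have "\<dots> \<le> sqrt B * sqrt S"
      using sIle vn B0 by (intro mult_left_mono real_sqrt_le_mono) simp_all
    finally have h: "S \<le> sqrt B * sqrt S" .
    have "sqrt S \<le> sqrt B"
    proof (cases "S = 0")
      case True thus ?thesis using B0 by simp
    next
      case False hence "0 < sqrt S" using S0 by simp
      moreover have "sqrt S * sqrt S \<le> sqrt S * sqrt B" using h S0 by (simp add: mult.commute)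
      ultimately show ?thesis by (rule mult_left_le_imp_le[rotated])
    qed
    thus ?thesis using S0 B0 by (simp add: S_def)
  qed
  have sw: "summable (\<lambda>i. (cmod (w i))\<^sup>2)" by (rule summableI_nonneg_bounded[OF _ b]) simp
  thus "(\<lambda>i. \<Sum>k. c k * u k i) \<in> l2" by (simp add: l2_def w_def)
  have "(l2norm w)\<^sup>2 = (\<Sum>i. (cmod (w i))\<^sup>2)" by (rule l2norm_sq) (simp add: l2_def sw)
  also have "\<dots> \<le> B" by (rule suminf_le_const[OF sw b])
  finally show "(l2norm (\<lambda>i. \<Sum>k. c k * u k i))\<^sup>2 \<le> (\<Sum>k. (cmod (c k))\<^sup>2)" by (simp add: w_def B_def)
qed


definition Kop :: "(nat \<Rightarrow> vec) \<Rightarrow> (nat \<Rightarrow> complex) \<Rightarrow> op" where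
  "Kop u d x = (\<lambda>i. \<Sum>k. d k * l2inner x (u k) * u k i)"

lemma Kop_coef: assumes u: "orthonormal_seq u" and d: "\<And>k. cmod (d k) \<le> D" and x: "x \<in> l2"
  shows "summable (\<lambda>k. (cmod (d k * l2inner x (u k)))\<^sup>2)"
    "(\<Sum>k. (cmod (d k * l2inner x (u k)))\<^sup>2) \<le> D\<^sup>2 * (l2norm x)\<^sup>2"
proof -
  have le: "(cmod (d k * l2inner x (u k)))\<^sup>2 \<le> D\<^sup>2 * (cmod (l2inner x (u k)))\<^sup>2" for k
  proof -
    have "cmod (d k * l2inner x (u k)) \<le> D * cmod (l2inner x (u k))"
      unfolding norm_mult by (rule mult_right_mono[OF d]) simp
    hence "(cmod (d k * l2inner x (u k)))\<^sup>2 \<le> (D * cmod (l2inner x (u k)))\<^sup>2" by (rule power_mono) simp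
    thus ?thesis by (simp add: power_mult_distrib)
  qed
  have s: "summable (\<lambda>k. D\<^sup>2 * (cmod (l2inner x (u k)))\<^sup>2)" by (intro summable_mult bessel_seq(1)[OF u x])
  show s1: "summable (\<lambda>k. (cmod (d k * l2inner x (u k)))\<^sup>2)"
    by (rule summable_comparison_test'[OF s, of 0]) (use le in auto)
  have "(\<Sum>k. (cmod (d k * l2inner x (u k)))\<^sup>2) \<le> (\<Sum>k. D\<^sup>2 * (cmod (l2inner x (u k)))\<^sup>2)"
    by (rule suminf_le[OF le s1 s])
  also have "\<dots> = D\<^sup>2 * (\<Sum>k. (cmod (l2inner x (u k)))\<^sup>2)" by (rule suminf_mult[OF bessel_seq(1)[OF u x]])
  also have "\<dots> \<le> D\<^sup>2 * (l2norm x)\<^sup>2" by (rule mult_left_mono[OF bessel_seq(2)[OF u x]]) simp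
  finally show "(\<Sum>k. (cmod (d k * l2inner x (u k)))\<^sup>2) \<le> D\<^sup>2 * (l2norm x)\<^sup>2" .
qed

lemma Kop_l2: assumes u: "orthonormal_seq u" and d: "\<And>k. cmod (d k) \<le> D" and x: "x \<in> l2"
  shows "Kop u d x \<in> l2" "l2norm (Kop u d x) \<le> D * l2norm x"
proof -
  note c = Kop_coef[of u d D x, OF u d x]
  have eq: "Kop u d x = (\<lambda>i. \<Sum>k. (d k * l2inner x (u k)) * u k i)" by (simp add: Kop_def)
  show kl: "Kop u d x \<in> l2" unfolding eq by (rule synthesis(1)[OF u c(1)])
  have "(l2norm (Kop u d x))\<^sup>2 \<le> D\<^sup>2 * (l2norm x)\<^sup>2"
    unfolding eq using synthesis(2)[OF u c(1)] c(2) by linarith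
  also have "\<dots> = (\<bar>D\<bar> * l2norm x)\<^sup>2" by (simp add: power_mult_distrib)
  finally have "l2norm (Kop u d x) \<le> \<bar>D\<bar> * l2norm x"
    by (rule power2_le_imp_le) (use l2norm_nonneg[OF x] in simp_all)
  moreover have "D \<ge> 0" using d[of 0] by (meson norm_ge_zero order_trans)
  ultimately show "l2norm (Kop u d x) \<le> D * l2norm x" by simp
qed

lemma Kop_summable: assumes u: "orthonormal_seq u" and d: "\<And>k. cmod (d k) \<le> D" and x: "x \<in> l2"
  shows "summable (\<lambda>k. d k * l2inner x (u k) * u k i)"
  using coord_summable(2)[OF u Kop_coef(1)[OF u d x]] by simp

lemma Kop_bounded: assumes u: "orthonormal_seq u" and d: "\<And>k. cmod (d k) \<le> D"
  shows "bounded_op (Kop u d)"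
  unfolding bounded_op_def
proof (intro conjI ballI allI exI)
  fix x assume "x \<in> l2" thus "Kop u d x \<in> l2" by (rule Kop_l2[of u d D, OF u d])
next
  fix x y assume x: "x \<in> l2" and y: "y \<in> l2"
  have ul2: "u k \<in> l2" for k by (rule orthonormal_seqD(1)[OF u])
  show "Kop u d (\<lambda>i. x i + y i) = (\<lambda>i. Kop u d x i + Kop u d y i)"
  proof
    fix i
    have "Kop u d (\<lambda>i. x i + y i) i = (\<Sum>k. d k * l2inner x (u k) * u k i + d k * l2inner y (u k) * u k i)"
      unfolding Kop_def by (simp add: inner_add_left[OF x y ul2] algebra_simps)
    also have "\<dots> = Kop u d x i + Kop u d y i"
      unfolding Kop_def by (rule suminf_add[symmetric, OF Kop_summable[of u d D x, OF u d x] Kop_summable[of u d D y, OF u d y]])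
    finally show "Kop u d (\<lambda>i. x i + y i) i = Kop u d x i + Kop u d y i" .
  qed
next
  fix x c assume x: "x \<in> l2"
  have ul2: "u k \<in> l2" for k by (rule orthonormal_seqD(1)[OF u])
  show "Kop u d (\<lambda>i. c * x i) = (\<lambda>i. c * Kop u d x i)"
  proof
    fix i
    have "Kop u d (\<lambda>i. c * x i) i = (\<Sum>k. c * (d k * l2inner x (u k) * u k i))"
      unfolding Kop_def by (simp add: inner_scale_left[OF x ul2] algebra_simps)
    also have "\<dots> = c * Kop u d x i" unfolding Kop_def by (rule suminf_mult[OF Kop_summable[of u d D x, OF u d x]])
    finally show "Kop u d (\<lambda>i. c * x i) i = c * Kop u d x i" .
  qed
next
  fix x assume "x \<in> l2" thus "l2norm (Kop u d x) \<le> D * l2norm x" by (rule Kop_l2[of u d D, OF u d])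
qed

lemma Kop_u: assumes u: "orthonormal_seq u" shows "Kop u d (u k) = (\<lambda>i. d k * u k i)"
proof
  fix i
  have "Kop u d (u k) i = (\<Sum>l\<in>{k}. d l * l2inner (u k) (u l) * u l i)"
    unfolding Kop_def by (rule suminf_finite) (use orthonormal_seqD(4)[OF u] in auto)
  thus "Kop u d (u k) i = d k * u k i" using orthonormal_seqD(2)[OF u] by simp
qed

lemma Kop_finite: assumes "finite S"
  shows "Kop u (\<lambda>k. if k \<in> S then d k else 0) x = (\<lambda>i. \<Sum>k\<in>S. d k * l2inner x (u k) * u k i)"
proof
  fix i show "Kop u (\<lambda>k. if k \<in> S then d k else 0) x i = (\<Sum>k\<in>S. d k * l2inner x (u k) * u k i)"
    unfolding Kop_def using assms by (subst suminf_finite[of S]) auto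
qed

lemma Kop_split: assumes u: "orthonormal_seq u" and d: "\<And>k. cmod (d k) \<le> D" and x: "x \<in> l2"
  shows "Kop u d x i - Kop u (\<lambda>k. if k \<in> S then d k else 0) x i = Kop u (\<lambda>k. if k \<in> S then 0 else d k) x i"
proof -
  have D0: "D \<ge> 0" using d[of 0] by (meson norm_ge_zero order_trans)
  have d1: "cmod (if k \<in> S then d k else 0) \<le> D" for k using d[of k] D0 by auto
  have d2: "cmod (if k \<in> S then 0 else d k) \<le> D" for k using d[of k] D0 by auto
  have "Kop u d x i = (\<Sum>k. (if k \<in> S then d k else 0) * l2inner x (u k) * u k i + (if k \<in> S then 0 else d k) * l2inner x (u k) * u k i)"
    unfolding Kop_def by (rule suminf_cong) auto
  also have "\<dots> = Kop u (\<lambda>k. if k \<in> S then d k else 0) x i + Kop u (\<lambda>k. if k \<in> S then 0 else d k) x i"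
    unfolding Kop_def by (rule suminf_add[symmetric, OF Kop_summable[of u _ D x, OF u d1 x] Kop_summable[of u _ D x, OF u d2 x]])
  finally show ?thesis by simp
qed

lemma rank_Kop_finite: assumes u: "orthonormal_seq u" and S: "finite S" "card S \<le> n"
  shows "rank_le (Kop u (\<lambda>k. if k \<in> S then d k else 0)) n"
proof -
  obtain h where h: "bij_betw h {0..<card S} S" using ex_bij_betw_nat_finite[OF S(1)] by blast
  define v where "v = (\<lambda>a. if a < card S then u (h a) else (\<lambda>_. 0))"
  have vl2: "\<forall>a<n. v a \<in> l2" using orthonormal_seqD(1)[OF u] by (auto simp: v_def)
  have ex: "\<exists>c. Kop u (\<lambda>k. if k \<in> S then d k else 0) x = (\<lambda>m. \<Sum>a<n. c a * v a m)" for x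
  proof (intro exI ext)
    fix m
    define c where "c = (\<lambda>a. if a < card S then d (h a) * l2inner x (u (h a)) else 0)"
    have "(\<Sum>a<n. c a * v a m) = (\<Sum>a\<in>{0..<card S}. c a * v a m)"
      by (rule sum.mono_neutral_right) (use S(2) in \<open>auto simp: c_def\<close>)
    also have "\<dots> = (\<Sum>a\<in>{0..<card S}. d (h a) * l2inner x (u (h a)) * u (h a) m)"
      by (rule sum.cong) (auto simp: c_def v_def)
    also have "\<dots> = (\<Sum>k\<in>S. d k * l2inner x (u k) * u k m)"
      by (rule sum.reindex_bij_betw[OF h])
    finally show "Kop u (\<lambda>k. if k \<in> S then d k else 0) x m = (\<Sum>a<n. c a * v a m)"
      by (simp add: Kop_finite[OF S(1)])
  qed
  show ?thesis unfolding rank_le_def by (rule exI[of _ v]) (use vl2 ex in simp)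
qed



lemma l2norm_zero_vec[simp]: "l2norm (\<lambda>_. 0) = 0" by (simp add: l2norm_def)

lemma opnorm_le: assumes "s \<ge> 0" "\<And>x. x \<in> l2 \<Longrightarrow> l2norm (G x) \<le> s * l2norm x"
  shows "opnorm G \<le> s"
  unfolding opnorm_def
proof (rule cSup_least)
  show "{l2norm (G x) |x. x \<in> l2 \<and> l2norm x \<le> 1} \<noteq> {}" using l2_zero by fastforce
next
  fix z assume "z \<in> {l2norm (G x) |x. x \<in> l2 \<and> l2norm x \<le> 1}"
  then obtain x where x: "x \<in> l2" "l2norm x \<le> 1" "z = l2norm (G x)" by blast
  have "z \<le> s * l2norm x" using assms(2)[OF x(1)] x(3) by simp
  also have "\<dots> \<le> s * 1" by (rule mult_left_mono[OF x(2) assms(1)])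
  finally show "z \<le> s" by simp
qed

lemma opnorm_ge0: assumes G: "bounded_op G" shows "0 \<le> opnorm G"
proof -
  obtain C where C: "C \<ge> 0" "\<And>x. x \<in> l2 \<Longrightarrow> l2norm (G x) \<le> C * l2norm x" using bop_bound[OF G] by blast
  have "bdd_above {l2norm (G x) |x. x \<in> l2 \<and> l2norm x \<le> 1}"
  proof (rule bdd_aboveI)
    fix z assume "z \<in> {l2norm (G x) |x. x \<in> l2 \<and> l2norm x \<le> 1}"
    then obtain x where x: "x \<in> l2" "l2norm x \<le> 1" "z = l2norm (G x)" by blast
    have "z \<le> C * l2norm x" using C(2)[OF x(1)] x(3) by simp
    also have "\<dots> \<le> C * 1" by (rule mult_left_mono[OF x(2) C(1)])
    finally show "z \<le> C" by simp
  qed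
  moreover have "l2norm (G (\<lambda>_. 0)) \<in> {l2norm (G x) |x. x \<in> l2 \<and> l2norm x \<le> 1}" by auto
  ultimately have "l2norm (G (\<lambda>_. 0)) \<le> opnorm G" unfolding opnorm_def by (rule cSup_upper[rotated])
  thus ?thesis using bop_zero[OF G] by simp
qed

lemma bop_diff_op: assumes K: "bounded_op K" and F: "bounded_op F" shows "bounded_op (\<lambda>x i. K x i - F x i)"
proof -
  obtain C1 where C1: "C1 \<ge> 0" "\<And>x. x \<in> l2 \<Longrightarrow> l2norm (K x) \<le> C1 * l2norm x" using bop_bound[OF K] by blast
  obtain C2 where C2: "C2 \<ge> 0" "\<And>x. x \<in> l2 \<Longrightarrow> l2norm (F x) \<le> C2 * l2norm x" using bop_bound[OF F] by blast
  have b: "l2norm (\<lambda>i. K x i - F x i) \<le> (C1 + C2) * l2norm x" if x: "x \<in> l2" for x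
  proof -
    have "l2norm (\<lambda>i. K x i - F x i) = l2norm (\<lambda>i. K x i + (-1) * F x i)" by simp
    also have "\<dots> \<le> l2norm (K x) + l2norm (\<lambda>i. (-1) * F x i)"
      by (rule l2norm_triangle[OF bop_l2[OF K x] l2_scale[OF bop_l2[OF F x]]])
    also have "l2norm (\<lambda>i. (-1) * F x i) = l2norm (F x)" using l2norm_scale[OF bop_l2[OF F x], of "-1"] by simp
    finally show ?thesis using C1(2)[OF x] C2(2)[OF x] by (simp add: algebra_simps)
  qed
  have ex: "\<exists>C. \<forall>x\<in>l2. l2norm (\<lambda>i. K x i - F x i) \<le> C * l2norm x" using b by blast
  show ?thesis unfolding bounded_op_def
    using K F ex by (auto simp: bop_l2 l2_diff bop_add bop_scale algebra_simps)
qed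

lemma approx_bounds: assumes K: "bounded_op K" and F0: "bounded_op F0" "rank_le F0 k" and s: "s \<ge> 0"
  and b: "\<And>x. x \<in> l2 \<Longrightarrow> l2norm (\<lambda>i. K x i - F0 x i) \<le> s * l2norm x"
  shows "0 \<le> approx_num K k" "approx_num K k \<le> s"
proof -
  let ?A = "{opnorm (\<lambda>x i. K x i - F x i) | F. bounded_op F \<and> rank_le F k}"
  have mem: "opnorm (\<lambda>x i. K x i - F0 x i) \<in> ?A" using F0 by blast
  have lb: "\<forall>z\<in>?A. 0 \<le> z" using opnorm_ge0[OF bop_diff_op[OF K]] by auto
  show "0 \<le> approx_num K k" unfolding approx_num_def by (rule cInf_greatest) (use mem lb in auto)
  have "approx_num K k \<le> opnorm (\<lambda>x i. K x i - F0 x i)" unfolding approx_num_def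
    by (rule cInf_lower[OF mem]) (use lb in \<open>auto simp: bdd_below_def\<close>)
  also have "\<dots> \<le> s" by (rule opnorm_le[OF s b])
  finally show "approx_num K k \<le> s" .
qed


lemma argmax_exists: fixes b :: "nat \<Rightarrow> real"
  assumes b0: "\<And>k. b k \<ge> 0" and bt: "b \<longlonglongrightarrow> 0" and S: "finite S"
  shows "\<exists>M. M \<notin> S \<and> (\<forall>l. l \<notin> S \<longrightarrow> b l \<le> b M)"
proof (cases "\<forall>l. l \<notin> S \<longrightarrow> b l = 0")
  case True
  obtain l0 where "l0 \<notin> S" using ex_new_if_finite[OF infinite_UNIV_nat S] by blast
  thus ?thesis using True by (intro exI[of _ l0]) auto
next
  case False
  then obtain l1 where l1': "l1 \<notin> S" "b l1 \<noteq> 0" by blast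
  have l1: "l1 \<notin> S" "b l1 > 0" using l1' b0[of l1] by auto
  have "eventually (\<lambda>n. b n < b l1) sequentially" using bt l1(2) by (rule order_tendstoD)
  then obtain N where N: "\<And>n. n \<ge> N \<Longrightarrow> b n < b l1" by (auto simp: eventually_sequentially)
  define A where "A = {l. l \<notin> S \<and> b l1 \<le> b l}"
  have Afin: "finite A"
  proof (rule finite_subset[of _ "{..<N}"])
    show "A \<subseteq> {..<N}"
    proof
      fix l assume "l \<in> A"
      hence "b l1 \<le> b l" by (simp add: A_def)
      thus "l \<in> {..<N}" using N[of l] by (cases "N \<le> l") auto
    qed
  qed simp
  have l1A: "l1 \<in> A" using l1 by (simp add: A_def)
  obtain M where M: "M \<in> A" "b M = Max (b ` A)"
    using Max_in[of "b ` A"] Afin l1A by (metis empty_iff finite_imageI image_iff image_is_empty)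
  have "b l \<le> b M" if "l \<notin> S" for l
  proof (cases "b l1 \<le> b l")
    case True hence "l \<in> A" using that by (simp add: A_def)
    thus ?thesis using M(2) Afin by simp
  next
    case False
    have "b l1 \<le> b M" using M(1) by (simp add: A_def)
    thus ?thesis using False by simp
  qed
  thus ?thesis using M(1) by (intro exI[of _ M]) (auto simp: A_def)
qed

lemma rearrangement: fixes a :: "nat \<Rightarrow> real"
  assumes p: "p > 0" and a0: "\<And>k. a k \<ge> 0" and sa: "summable (\<lambda>k. a k powr p)"
  shows "\<exists>s. (\<forall>k. s k \<ge> 0) \<and> summable (\<lambda>k. s k powr p) \<and>
     (\<forall>k. \<exists>S. finite S \<and> card S \<le> k \<and> (\<forall>l. l \<notin> S \<longrightarrow> a l \<le> s k))"
proof -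
  define b where "b = (\<lambda>k. a k powr p)"
  have b0: "b k \<ge> 0" for k by (simp add: b_def)
  have bt: "b \<longlonglongrightarrow> 0" unfolding b_def by (rule summable_LIMSEQ_zero[OF sa])
  have exM: "\<exists>M. M \<notin> S \<and> (\<forall>l. l \<notin> S \<longrightarrow> a l \<le> a M)" if S: "finite S" for S
  proof -
    obtain M where M: "M \<notin> S" "\<forall>l. l \<notin> S \<longrightarrow> b l \<le> b M" using argmax_exists[OF b0 bt S] by blast
    have "a l \<le> a M" if "l \<notin> S" for l
    proof (rule ccontr)
      assume "\<not> a l \<le> a M"
      hence "a M powr p < a l powr p" using p a0 by (intro powr_less_mono2) auto
      moreover have "a l powr p \<le> a M powr p" using M(2) that by (simp add: b_def)
      ultimately show False by simp
    qed
    thus ?thesis using M(1) by blast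
  qed
  define Mf where "Mf = (\<lambda>S. SOME M. M \<notin> S \<and> (\<forall>l. l \<notin> S \<longrightarrow> a l \<le> a M))"
  have Mf: "Mf S \<notin> S" "\<And>l. l \<notin> S \<Longrightarrow> a l \<le> a (Mf S)" if "finite S" for S
    using someI_ex[OF exM[OF that]] by (auto simp: Mf_def)
  define Sq where "Sq = rec_nat {} (\<lambda>k S. insert (Mf S) S)"
  have Sq0: "Sq 0 = {}" and SqS: "Sq (Suc k) = insert (Mf (Sq k)) (Sq k)" for k by (simp_all add: Sq_def)
  have fin: "finite (Sq k)" for k by (induction k) (simp_all add: Sq0 SqS)
  have card: "card (Sq k) \<le> k" for k
  proof (induction k)
    case 0 thus ?case by (simp add: Sq0)
  next
    case (Suc k) thus ?case using card_insert_le_m1[of "Suc k" "Sq k" "Mf (Sq k)"] fin[of k]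
      by (simp add: SqS card_insert_if)
  qed
  have mono: "Sq j \<subseteq> Sq (j + d)" for j d by (induction d) (auto simp: SqS)
  define g where "g = (\<lambda>k. Mf (Sq k))"
  define s where "s = (\<lambda>k. a (g k))"
  have inj: "inj_on g {..<n}" for n
  proof (rule inj_onI)
    fix j k assume jk: "j \<in> {..<n}" "k \<in> {..<n}" "g j = g k"
    show "j = k"
    proof (rule ccontr)
      assume "j \<noteq> k"
      then consider "j < k" | "k < j" by linarith
      thus False
      proof cases
        case 1
        have "g j \<in> Sq (Suc j)" by (simp add: SqS g_def)
        also have "Sq (Suc j) \<subseteq> Sq k" using mono[of "Suc j" "k - Suc j"] 1 by simp
        finally show False using Mf(1)[OF fin[of k]] jk(3) by (simp add: g_def)
      next
        case 2
        have "g k \<in> Sq (Suc k)" by (simp add: SqS g_def)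
        also have "Sq (Suc k) \<subseteq> Sq j" using mono[of "Suc k" "j - Suc k"] 2 by simp
        finally show False using Mf(1)[OF fin[of j]] jk(3) by (simp add: g_def)
      qed
    qed
  qed
  have bound: "(\<Sum>k<n. s k powr p) \<le> (\<Sum>k. b k)" for n
  proof -
    have "(\<Sum>k<n. s k powr p) = (\<Sum>k<n. b (g k))" by (simp add: s_def b_def)
    also have "\<dots> = (\<Sum>l\<in>g ` {..<n}. b l)" by (rule sum.reindex[OF inj, symmetric, unfolded o_def])
    also have "\<dots> \<le> (\<Sum>k. b k)" by (rule sum_le_suminf) (use sa b0 in \<open>auto simp: b_def\<close>)
    finally show ?thesis .
  qed
  have ss: "summable (\<lambda>k. s k powr p)" by (rule summableI_nonneg_bounded[OF _ bound]) simp
  have "\<forall>k. \<exists>S. finite S \<and> card S \<le> k \<and> (\<forall>l. l \<notin> S \<longrightarrow> a l \<le> s k)"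
  proof
    fix k show "\<exists>S. finite S \<and> card S \<le> k \<and> (\<forall>l. l \<notin> S \<longrightarrow> a l \<le> s k)"
      using fin[of k] card[of k] Mf(2)[OF fin[of k]] by (auto simp: s_def g_def)
  qed
  moreover have "\<forall>k. s k \<ge> 0" using a0 by (simp add: s_def)
  ultimately show ?thesis using ss by blast
qed



lemma powr3: fixes x y z p :: real assumes "x \<ge> 0" "y \<ge> 0" "z \<ge> 0" "p > 0"
  shows "(x + y + z) powr p \<le> 3 powr p * (x powr p + y powr p + z powr p)"
proof -
  define m where "m = max x (max y z)"
  have "x + y + z \<le> 3 * m" unfolding m_def by linarith
  hence "(x + y + z) powr p \<le> (3 * m) powr p" using assms by (intro powr_mono2) auto
  also have "\<dots> = 3 powr p * m powr p" by (rule powr_mult)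
  also have "m powr p \<le> x powr p + y powr p + z powr p"
    unfolding m_def by (auto simp: max_def)
  hence "3 powr p * m powr p \<le> 3 powr p * (x powr p + y powr p + z powr p)" by (intro mult_left_mono) auto
  finally show ?thesis .
qed

lemma powr_pow: fixes x p :: real assumes "x > 0" shows "(x ^ n) powr p = (x powr p) ^ n"
  by (induction n) (use assms in \<open>auto simp: powr_mult\<close>)

lemma geom_half_powr: fixes p :: real assumes "p > 0" shows "summable (\<lambda>k. ((1/2)^k) powr p)"
proof -
  have "(1/2::real) powr p = 2 powr (- p)" by (simp add: powr_minus_divide powr_divide)
  also have "\<dots> < 1" by (rule powr_less_one) (use assms in auto)
  finally have "norm ((1/2::real) powr p) < 1" by simp
  hence "summable (\<lambda>k. ((1/2::real) powr p) ^ k)" by (rule summable_geometric)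
  thus ?thesis by (simp add: powr_pow)
qed


theorem corollary5p1:
  fixes T :: "'n::finite \<Rightarrow> op" and p :: real and lam :: "nat \<Rightarrow> 'n \<Rightarrow> complex"
  assumes "\<forall>j. bounded_op (T j)"
    and "p > 1"
    and "summable (\<lambda>k. (setdist_max (lam k) (ess_num_range T)) powr p)"
  shows "\<exists>K :: 'n \<Rightarrow> op. (\<forall>j. schatten p (K j)) \<and>
           lam \<in> diag_set (\<lambda>j x i. T j x i + K j x i)"
proof -
  note T = assms(1) and p = assms(2) and sd = assms(3)
  have p0: "p > 0" using p by simp
  obtain C where C0: "C \<ge> 0" and C: "\<forall>j. \<forall>x\<in>l2. l2norm (T j x) \<le> C * l2norm x" using uniform_bound[OF T] by blast
  define W where "W = ess_num_range T"
  have Wne: "W \<noteq> {}" using ess_nonempty[OF T] by (simp add: W_def)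
  define sdk where "sdk = (\<lambda>k. setdist_max (lam k) W)"
  have sdk0: "sdk k \<ge> 0" for k
    unfolding sdk_def setdist_max_def by (rule cInf_greatest) (use Wne maxdist_nonneg in auto)
  have "\<exists>m\<in>W. maxdist (lam k) m < sdk k + (1/2)^k" for k
  proof -
    have "Inf (maxdist (lam k) ` W) < sdk k + (1/2)^k" by (simp add: sdk_def setdist_max_def)
    then obtain z where "z \<in> maxdist (lam k) ` W" "z < sdk k + (1/2)^k" using cInf_lessD[of "maxdist (lam k) ` W"] Wne by blast
    thus ?thesis by blast
  qed
  then obtain \<mu> where mu: "\<And>k. \<mu> k \<in> W" "\<And>k. maxdist (lam k) (\<mu> k) < sdk k + (1/2)^k" by metis
  have muT: "\<forall>k. \<mu> k \<in> ess_num_range T" using mu(1) by (simp add: W_def)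
  obtain u where u: "onb u" and serr: "summable (\<lambda>k. (maxdist (\<lambda>j. l2inner (T j (u k)) (u k)) (\<mu> k)) powr p)"
    using construct_basis[OF T C C0 muT p] by blast
  have uo: "orthonormal_seq u" using u by (simp add: onb_def)
  define md where "md = (\<lambda>k. maxdist (\<lambda>j. l2inner (T j (u k)) (u k)) (\<mu> k))"
  define d where "d = (\<lambda>j k. lam k j - l2inner (T j (u k)) (u k))"
  have abound: "cmod (d j k) \<le> sdk k + (1/2)^k + md k" for j k
  proof -
    have "cmod (d j k) \<le> cmod (lam k j - \<mu> k j) + cmod (l2inner (T j (u k)) (u k) - \<mu> k j)"
      unfolding d_def using norm_triangle_ineq[of "lam k j - \<mu> k j" "\<mu> k j - l2inner (T j (u k)) (u k)"]
      by (simp add: norm_minus_commute)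
    also have "\<dots> \<le> maxdist (lam k) (\<mu> k) + md k" unfolding md_def by (intro add_mono maxdist_ge)
    finally show ?thesis using mu(2)[of k] by simp
  qed
  have asum: "summable (\<lambda>k. (cmod (d j k)) powr p)" for j
  proof -
    have s: "summable (\<lambda>k. 3 powr p * ((sdk k) powr p + ((1/2)^k) powr p + (md k) powr p))"
      using sd serr geom_half_powr[OF p0] by (intro summable_mult summable_add) (auto simp: sdk_def W_def md_def)
    show ?thesis
    proof (rule summable_comparison_test'[OF s, of 0])
      fix k
      have "cmod (d j k) powr p \<le> (sdk k + (1/2)^k + md k) powr p"
        by (rule powr_mono2) (use p0 abound in auto)
      also have "\<dots> \<le> 3 powr p * ((sdk k) powr p + ((1/2)^k) powr p + (md k) powr p)"
        by (rule powr3) (use sdk0 p0 in \<open>auto simp: md_def maxdist_nonneg\<close>)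
      finally show "norm (cmod (d j k) powr p) \<le> 3 powr p * ((sdk k) powr p + ((1/2)^k) powr p + (md k) powr p)" by simp
    qed
  qed
  have "\<forall>j. \<exists>s. (\<forall>k. s k \<ge> 0) \<and> summable (\<lambda>k. s k powr p) \<and>
     (\<forall>k. \<exists>S. finite S \<and> card S \<le> k \<and> (\<forall>l. l \<notin> S \<longrightarrow> cmod (d j l) \<le> s k))"
    using rearrangement[OF p0 _ asum] by auto
  then obtain s where s: "\<And>j k. s j k \<ge> 0" "\<And>j. summable (\<lambda>k. s j k powr p)"
     "\<And>j k. \<exists>S. finite S \<and> card S \<le> k \<and> (\<forall>l. l \<notin> S \<longrightarrow> cmod (d j l) \<le> s j k)" by metis
  have Dj: "cmod (d j l) \<le> s j 0" for j l
  proof -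
    obtain S where "finite S" "card S \<le> 0" "\<forall>l. l \<notin> S \<longrightarrow> cmod (d j l) \<le> s j 0" using s(3)[where j=j and k=0] by blast
    thus ?thesis by simp
  qed
  define K where "K = (\<lambda>j. Kop u (d j))"
  have Kb: "bounded_op (K j)" for j unfolding K_def by (rule Kop_bounded[OF uo Dj])
  have sch: "schatten p (K j)" for j
  proof -
    have ap: "0 \<le> approx_num (K j) k \<and> approx_num (K j) k \<le> s j k" for k
    proof -
      obtain S where S: "finite S" "card S \<le> k" "\<forall>l. l \<notin> S \<longrightarrow> cmod (d j l) \<le> s j k" using s(3)[where j=j and k=k] by blast
      define F0 where "F0 = Kop u (\<lambda>l. if l \<in> S then d j l else 0)"
      have F0b: "bounded_op F0" unfolding F0_def
        by (rule Kop_bounded[OF uo, of _ "s j 0"]) (use Dj s(1) in auto)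
      have F0r: "rank_le F0 k" unfolding F0_def by (rule rank_Kop_finite[OF uo S(1,2)])
      have dd: "cmod (if l \<in> S then 0 else d j l) \<le> s j k" for l using S(3) s(1)[where j=j and k=k] by auto
      have b: "l2norm (\<lambda>i. K j x i - F0 x i) \<le> s j k * l2norm x" if x: "x \<in> l2" for x
      proof -
        have "(\<lambda>i. K j x i - F0 x i) = Kop u (\<lambda>l. if l \<in> S then 0 else d j l) x"
          unfolding K_def F0_def using Kop_split[OF uo Dj x] by auto
        thus ?thesis using Kop_l2(2)[OF uo dd x] by simp
      qed
      show ?thesis using approx_bounds[OF Kb F0b F0r s(1) b] by blast
    qed
    have "summable (\<lambda>k. approx_num (K j) k powr p)"
    proof (rule summable_comparison_test'[OF s(2)[of j], of 0])
      fix k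
      have "approx_num (K j) k powr p \<le> s j k powr p" by (rule powr_mono2) (use ap[of k] p0 in auto)
      thus "norm (approx_num (K j) k powr p) \<le> s j k powr p" by simp
    qed
    thus ?thesis using Kb by (simp add: schatten_def)
  qed
  have diag: "lam = (\<lambda>k j. l2inner ((\<lambda>j x i. T j x i + K j x i) j (u k)) (u k))"
  proof (intro ext)
    fix k j
    have ul: "u k \<in> l2" by (rule orthonormal_seqD(1)[OF uo])
    have Tl: "T j (u k) \<in> l2" using bop_l2 T ul by blast
    have Ku: "K j (u k) = (\<lambda>i. d j k * u k i)" unfolding K_def by (rule Kop_u[OF uo])
    have "l2inner ((\<lambda>j x i. T j x i + K j x i) j (u k)) (u k) = l2inner (T j (u k)) (u k) + l2inner (K j (u k)) (u k)"
      by (simp add: inner_add_left[OF Tl bop_l2[OF Kb ul] ul])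
    also have "l2inner (K j (u k)) (u k) = d j k"
      unfolding Ku inner_scale_left[OF ul ul] using orthonormal_seqD(2)[OF uo] by simp
    finally show "lam k j = l2inner ((\<lambda>j x i. T j x i + K j x i) j (u k)) (u k)" by (simp add: d_def)
  qed
  have "lam \<in> diag_set (\<lambda>j x i. T j x i + K j x i)" unfolding diag_set_def using u diag by blast
  thus ?thesis using sch by blast
qed

end
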